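(* Let $\alpha,\beta\in(0,1)$, and let $u\in C([0,1],L(\mathbb{R}^n,\mathbb{R}^m))$, $v\in\mathcal{C}^\alpha(L(\mathbb{R}^d,\mathbb{R}^n))$ and $w\in\mathcal{C}^\beta(\mathbb{R}^d)$. Then \[ \|\pi_<(u,\pi_<(v,w))-\pi_<(uv,w)\|_{\alpha+\beta}\lesssim\|u\|_\infty\|v\|_\alpha\|w\|_\beta. \]
   Context: Index set: pairs $(p,m)$ with either $p=-1,m=0$, or $p\in\mathbb{N}=\{0,1,2,\dots\}$ and $0\le m\le 2^p$. For $p\in\mathbb{N}$, $1\le m\le 2^p$ set $t^0_{pm}=(m-1)2^{-p}$, $t^1_{pm}=(2m-1)2^{-p-1}$, $t^2_{pm}=m2^{-p}$. Rescaled Haar functions: for $p\in\mathbb{N}$, $1\le m\le 2^p$, $\chi_{pm}=2^p$ on $[t^0_{pm},t^1_{pm})$, $=-2^p$ on $[t^1_{pm},t^2_{pm})$, $=0$ elsewhere; $\chi_{00}\equiv1$; $\chi_{p0}\equiv0$ for $p\ge1$. Rescaled Schauder functions: $\varphi_{pm}(t)=\int_0^t\chi_{pm}(s)\,ds$ for $p\in\mathbb{N}$, and $\varphi_{-10}\equiv1$. For continuous $f:[0,1]\to E$ ($E$ a finite-dimensional normed space), coefficients: $f_{-10}=f(0)$, $f_{00}=f(1)-f(0)$, $f_{p0}=0$ for $p\ge1$, $f_{pm}=2f(t^1_{pm})-f(t^0_{pm})-f(t^2_{pm})$ for $p\in\mathbb{N},m\ge1$. Schauder blocks: $\Delta_pf=\sum_{m=0}^{2^p}f_{pm}\varphi_{pm}$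 ($p\ge-1$), $S_pf=\sum_{q=-1}^p\Delta_qf$. For $\alpha>0$, $\|f\|_\alpha:=\sup_{p,m}2^{p\alpha}|f_{pm}|$ and $\mathcal{C}^\alpha(E):=\{f\in C([0,1],E):\|f\|_\alpha<\infty\}$. Paraproduct: $\pi_<(v,w):=\sum_{p\ge0}S_{p-1}v\,\Delta_pw$ (products are compositions/applications of linear maps). $\|\cdot\|_\infty$ is the sup norm; $\lesssim$ hides a constant depending only on $\alpha,\beta$. *)

theory Defs
  imports "HOL-Analysis.Analysis"
begin

text \<open>Conventions: a vector in R^k is a function x :: nat \<Rightarrow> real of which only the
coordinates i < k are used; a linear map in L(R^n,R^m) is a matrix
A :: nat \<Rightarrow> nat \<Rightarrow> real of which only the entries A i j with i < m, j < n are used.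
Dimensions are explicit natural numbers so that the constant can be chosen
independently of them.\<close>

definition vnorm :: "nat \<Rightarrow> (nat \<Rightarrow> real) \<Rightarrow> real" where
  "vnorm k x = sqrt (\<Sum>i<k. (x i)\<^sup>2)"

definition matvec :: "nat \<Rightarrow> (nat \<Rightarrow> nat \<Rightarrow> real) \<Rightarrow> (nat \<Rightarrow> real) \<Rightarrow> (nat \<Rightarrow> real)" where
  "matvec n A x = (\<lambda>i. \<Sum>j<n. A i j * x j)"

definition matmul :: "nat \<Rightarrow> (nat \<Rightarrow> nat \<Rightarrow> real) \<Rightarrow> (nat \<Rightarrow> nat \<Rightarrow> real) \<Rightarrow> (nat \<Rightarrow> nat \<Rightarrow> real)" where
  "matmul n A B = (\<lambda>i j. \<Sum>k<n. A i k * B k j)"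

definition opnorm :: "nat \<Rightarrow> nat \<Rightarrow> (nat \<Rightarrow> nat \<Rightarrow> real) \<Rightarrow> real" where
  "opnorm m n A = Sup {vnorm m (matvec n A x) | x. vnorm n x \<le> 1}"

definition tt0 :: "nat \<Rightarrow> nat \<Rightarrow> real" where "tt0 p m = (real m - 1) / 2 ^ p"
definition tt1 :: "nat \<Rightarrow> nat \<Rightarrow> real" where "tt1 p m = (2 * real m - 1) / 2 ^ (p + 1)"
definition tt2 :: "nat \<Rightarrow> nat \<Rightarrow> real" where "tt2 p m = real m / 2 ^ p"

definition haar :: "nat \<Rightarrow> nat \<Rightarrow> real \<Rightarrow> real" where
  "haar p m s =
     (if m = 0 then (if p = 0 then 1 else 0)
      else if tt0 p m \<le> s \<and> s < tt1 p m then 2 ^ p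
      else if tt1 p m \<le> s \<and> s < tt2 p m then - (2 ^ p)
      else 0)"

text \<open>Rescaled Schauder functions phi_pm, p \<in> N (phi_{-1,0} = 1 is handled separately).\<close>
definition schauder :: "nat \<Rightarrow> nat \<Rightarrow> real \<Rightarrow> real" where
  "schauder p m t = integral {0..t} (haar p m)"

text \<open>Schauder coefficients f_pm (p \<in> N) of a scalar function; f_{-1,0} = f 0.\<close>
definition scoef :: "(real \<Rightarrow> real) \<Rightarrow> nat \<Rightarrow> nat \<Rightarrow> real" where
  "scoef f p m =
     (if m = 0 then (if p = 0 then f 1 - f 0 else 0)
      else 2 * f (tt1 p m) - f (tt0 p m) - f (tt2 p m))"

text \<open>Schauder block Delta_p f for p \<in> N (Delta_{-1} f = f 0).\<close>
definition sdelta :: "(real \<Rightarrow> real) \<Rightarrow> nat \<Rightarrow> real \<Rightarrow> real" where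
  "sdelta f p t = (\<Sum>m\<in>{0..2 ^ p}. scoef f p m * schauder p m t)"

text \<open>Partial sums S_p f = sum_{q=-1}^p Delta_q f, for integer p \<ge> -1.\<close>
definition spart :: "(real \<Rightarrow> real) \<Rightarrow> int \<Rightarrow> real \<Rightarrow> real" where
  "spart f p t = f 0 + (\<Sum>q<nat (p + 1). sdelta f q t)"

text \<open>Paraproduct pi_<(V,W) = sum_{p\<ge>0} S_{p-1}V Delta_p W, for a matrix-valued V
(linear maps R^k \<rightarrow> R^_) and a vector-valued W (in R^k); coordinatewise series.\<close>
definition paraprod :: "nat \<Rightarrow> (real \<Rightarrow> nat \<Rightarrow> nat \<Rightarrow> real) \<Rightarrow> (real \<Rightarrow> nat \<Rightarrow> real) \<Rightarrow> real \<Rightarrow> nat \<Rightarrow> real" where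
  "paraprod k V W t i =
     (\<Sum>p. \<Sum>j<k. spart (\<lambda>s. V s i j) (int p - 1) t * sdelta (\<lambda>s. W s j) p t)"

definition vcoef :: "(real \<Rightarrow> nat \<Rightarrow> real) \<Rightarrow> nat \<Rightarrow> nat \<Rightarrow> (nat \<Rightarrow> real)" where
  "vcoef f p m = (\<lambda>i. scoef (\<lambda>s. f s i) p m)"

definition mcoef :: "(real \<Rightarrow> nat \<Rightarrow> nat \<Rightarrow> real) \<Rightarrow> nat \<Rightarrow> nat \<Rightarrow> (nat \<Rightarrow> nat \<Rightarrow> real)" where
  "mcoef f p m = (\<lambda>i j. scoef (\<lambda>s. f s i j) p m)"

text \<open>The sets {2^{p alpha} |f_pm|} over the index set (including (p,m) = (-1,0)).\<close>
definition hset_vec :: "real \<Rightarrow> nat \<Rightarrow> (real \<Rightarrow> nat \<Rightarrow> real) \<Rightarrow> real set" where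
  "hset_vec a k f = insert (2 powr (- a) * vnorm k (f 0))
      {2 powr (real p * a) * vnorm k (vcoef f p m) | p m. m \<le> 2 ^ p}"

definition hset_mat :: "real \<Rightarrow> nat \<Rightarrow> nat \<Rightarrow> (real \<Rightarrow> nat \<Rightarrow> nat \<Rightarrow> real) \<Rightarrow> real set" where
  "hset_mat a m n f = insert (2 powr (- a) * opnorm m n (f 0))
      {2 powr (real p * a) * opnorm m n (mcoef f p q) | p q. q \<le> 2 ^ p}"

definition hnorm_vec :: "real \<Rightarrow> nat \<Rightarrow> (real \<Rightarrow> nat \<Rightarrow> real) \<Rightarrow> real" where
  "hnorm_vec a k f = Sup (hset_vec a k f)"

definition hnorm_mat :: "real \<Rightarrow> nat \<Rightarrow> nat \<Rightarrow> (real \<Rightarrow> nat \<Rightarrow> nat \<Rightarrow> real) \<Rightarrow> real" where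
  "hnorm_mat a m n f = Sup (hset_mat a m n f)"

definition cont_vec :: "nat \<Rightarrow> (real \<Rightarrow> nat \<Rightarrow> real) \<Rightarrow> bool" where
  "cont_vec k f = (\<forall>i<k. continuous_on {0..1} (\<lambda>t. f t i))"

definition cont_mat :: "nat \<Rightarrow> nat \<Rightarrow> (real \<Rightarrow> nat \<Rightarrow> nat \<Rightarrow> real) \<Rightarrow> bool" where
  "cont_mat m n f = (\<forall>i<m. \<forall>j<n. continuous_on {0..1} (\<lambda>t. f t i j))"

definition Hoelder_vec :: "real \<Rightarrow> nat \<Rightarrow> (real \<Rightarrow> nat \<Rightarrow> real) \<Rightarrow> bool" where
  "Hoelder_vec a k f = (cont_vec k f \<and> bdd_above (hset_vec a k f))"

definition Hoelder_mat :: "real \<Rightarrow> nat \<Rightarrow> nat \<Rightarrow> (real \<Rightarrow> nat \<Rightarrow> nat \<Rightarrow> real) \<Rightarrow> bool" where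
  "Hoelder_mat a m n f = (cont_mat m n f \<and> bdd_above (hset_mat a m n f))"

definition supnorm_mat :: "nat \<Rightarrow> nat \<Rightarrow> (real \<Rightarrow> nat \<Rightarrow> nat \<Rightarrow> real) \<Rightarrow> real" where
  "supnorm_mat m n u = Sup ((\<lambda>t. opnorm m n (u t)) ` {0..1})"

end

theory Submission
  imports Defs
begin


lemma tt_simps: "tt0 p m = (real m - 1) / 2^p" "tt1 p m = (2*real m - 1) / 2^(p+1)" "tt2 p m = real m / 2^p"
  by (simp_all add: tt0_def tt1_def tt2_def)

lemma schauder_tent:
  assumes "1 \<le> m" "0 \<le> t"
  shows "schauder p m t = max 0 (1/2 - \<bar>2^p*t - real m + 1/2\<bar>)"
proof -
  define c :: real where "c = 2^p"
  have c: "c > 0" by (simp add: c_def)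
  define F where "F = (\<lambda>y::real. max 0 (1/2 - \<bar>c*y - real m + 1/2\<bar>))"
  have t0: "tt0 p m = (real m - 1)/c" and t1: "tt1 p m = (real m - 1/2)/c" and t2: "tt2 p m = real m / c"
    by (simp_all add: tt_simps c_def field_simps)
  have hr: "haar p m x = (if (real m - 1)/c \<le> x \<and> x < (real m - 1/2)/c then c
      else if (real m - 1/2)/c \<le> x \<and> x < real m/c then -c else 0)" for x
    using assms(1) unfolding haar_def t0 t1 t2 c_def by auto
  have der: "(F has_vector_derivative haar p m x) (at x)"
    if xS: "x \<notin> {(real m - 1)/c, (real m - 1/2)/c, real m/c}" for x
  proof -
    have o1: "open {y. y < (real m - 1)/c}" "open {(real m - 1)/c <..< (real m - 1/2)/c}"
      "open {(real m - 1/2)/c <..< real m/c}" "open {y. real m/c < y}"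
      by (auto intro: open_Collect_less)
    consider "x < (real m - 1)/c" | "(real m - 1)/c < x \<and> x < (real m - 1/2)/c"
      | "(real m - 1/2)/c < x \<and> x < real m/c" | "real m/c < x"
    proof -
      have "(real m - 1)/c < (real m - 1/2)/c" "(real m - 1/2)/c < real m/c"
        using c by (simp_all add: divide_strict_right_mono)
      then show thesis using that xS by (smt (verit, best) insert_iff)
    qed
    then have "(F has_field_derivative haar p m x) (at x)"
    proof cases
      case 1
      have "((\<lambda>y. 0) has_field_derivative 0) (at x)" by simp
      moreover have "F y = 0" if "y < (real m - 1)/c" for y
      proof -
        have "c*y < real m - 1" using that c by (simp add: field_simps)
        then show ?thesis unfolding F_def by auto
      qed
      ultimately have "(F has_field_derivative 0) (at x)"
        using has_field_derivative_transform_within_open[OF _ o1(1), of "\<lambda>y. 0" 0 x F] 1 by auto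
      then show ?thesis using 1 hr[of x] c by (auto simp: field_simps)
    next
      case 2
      have "((\<lambda>y. c*y - real m + 1) has_field_derivative c) (at x)"
        by (auto intro!: derivative_eq_intros)
      moreover have "F y = c*y - real m + 1" if "(real m - 1)/c < y \<and> y < (real m - 1/2)/c" for y
      proof -
        have "real m - 1 < c*y" "c*y < real m - 1/2" using that c by (simp_all add: field_simps)
        then show ?thesis unfolding F_def by auto
      qed
      ultimately have "(F has_field_derivative c) (at x)"
        using has_field_derivative_transform_within_open[OF _ o1(2), of "\<lambda>y. c*y - real m + 1" c x F] 2 by auto
      then show ?thesis using 2 hr[of x] c by (auto simp: field_simps)
    next
      case 3
      have "((\<lambda>y. real m - c*y) has_field_derivative -c) (at x)"
        by (auto intro!: derivative_eq_intros)
      moreover have "F y = real m - c*y" if "(real m - 1/2)/c < y \<and> y < real m/c" for y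
      proof -
        have "real m - 1/2 < c*y" "c*y < real m" using that c by (simp_all add: field_simps)
        then show ?thesis unfolding F_def by auto
      qed
      ultimately have "(F has_field_derivative -c) (at x)"
        using has_field_derivative_transform_within_open[OF _ o1(3), of "\<lambda>y. real m - c*y" "-c" x F] 3 by auto
      then show ?thesis using 3 hr[of x] c by (auto simp: field_simps)
    next
      case 4
      have "((\<lambda>y. 0) has_field_derivative 0) (at x)" by simp
      moreover have "F y = 0" if "real m/c < y" for y
      proof -
        have "real m < c*y" using that c by (simp add: field_simps)
        then show ?thesis unfolding F_def by auto
      qed
      ultimately have "(F has_field_derivative 0) (at x)"
        using has_field_derivative_transform_within_open[OF _ o1(4), of "\<lambda>y. 0" 0 x F] 4 by auto
      then show ?thesis using 4 hr[of x] c by (auto simp: field_simps)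
    qed
    then show ?thesis by (simp add: has_real_derivative_iff_has_vector_derivative)
  qed
  have "(haar p m has_integral (F t - F 0)) {0..t}"
    by (rule fundamental_theorem_of_calculus_strong[of "{(real m - 1)/c, (real m - 1/2)/c, real m/c}"])
       (use assms der in \<open>auto simp: F_def intro!: continuous_intros\<close>)
  moreover have "F 0 = 0" using assms(1) by (simp add: F_def)
  ultimately show ?thesis unfolding schauder_def F_def c_def by (simp add: integral_unique)
qed

lemma schauder_00: "0 \<le> t \<Longrightarrow> schauder 0 0 t = t"
  unfolding schauder_def haar_def by simp

lemma schauder_p0: "0 < p \<Longrightarrow> schauder p 0 t = 0"
  unfolding schauder_def haar_def by simp



lemma tent_eq:
  fixes x :: real
  assumes "1 \<le> m" "real j \<le> x" "x \<le> real j + 1"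
  shows "max 0 (1/2 - \<bar>x - real m + 1/2\<bar>) = (if m = j+1 then min (x - real j) (real j + 1 - x) else 0)"
proof (cases "m = j+1")
  case True then show ?thesis using assms by (auto simp: abs_if min_def)
next
  case False
  then have "m \<le> j \<or> m \<ge> j+2" by auto
  then show ?thesis
  proof
    assume "m \<le> j" then have "real m \<le> real j" by simp
    then show ?thesis using False assms by (auto simp: abs_if)
  next
    assume "m \<ge> j+2" then have "real m \<ge> real j + 2" by simp
    then show ?thesis using False assms by (auto simp: abs_if)
  qed
qed

lemma sdelta_on:
  assumes "j < 2^p" "real j \<le> 2^p*t" "2^p*t \<le> real j + 1" "0 \<le> t"
  shows "sdelta g p t = scoef g p (j+1) * min (2^p*t - real j) (real j + 1 - 2^p*t)
           + (if p = 0 then scoef g 0 0 * t else 0)"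
proof -
  have split: "{0..(2::nat)^p} = insert 0 {1..2^p}" by auto
  have "(\<Sum>m\<in>{1..(2::nat)^p}. scoef g p m * schauder p m t)
      = (\<Sum>m\<in>{1..(2::nat)^p}. (if m = j+1 then scoef g p (j+1) * min (2^p*t - real j) (real j + 1 - 2^p*t) else 0))"
  proof (rule sum.cong)
    fix m assume "m \<in> {1..(2::nat)^p}"
    then have "1 \<le> m" by auto
    then show "scoef g p m * schauder p m t = (if m = j+1 then scoef g p (j+1) * min (2^p*t - real j) (real j + 1 - 2^p*t) else 0)"
      using schauder_tent[OF \<open>1 \<le> m\<close> assms(4), of p] tent_eq[OF \<open>1 \<le> m\<close> assms(2,3)] by auto
  qed simp
  also have "\<dots> = scoef g p (j+1) * min (2^p*t - real j) (real j + 1 - 2^p*t)"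
    using assms(1) by (simp add: sum.delta)
  finally have A: "(\<Sum>m\<in>{1..(2::nat)^p}. scoef g p m * schauder p m t) = scoef g p (j+1) * min (2^p*t - real j) (real j + 1 - 2^p*t)" .
  have B: "scoef g p 0 * schauder p 0 t = (if p = 0 then scoef g 0 0 * t else 0)"
    using schauder_00[OF assms(4)] schauder_p0[of p t] by auto
  show ?thesis unfolding sdelta_def split
    by (subst sum.insert) (use A B in auto)
qed



lemma even_odd_real:
  fixes j :: nat
  shows "even j \<Longrightarrow> real j = 2 * real (j div 2)" "odd j \<Longrightarrow> real j = 2 * real (j div 2) + 1"
proof -
  assume "even j" then obtain a where "j = 2*a" by blast
  then show "real j = 2 * real (j div 2)" by simp
next
  assume "odd j" then obtain a where "j = 2*a+1" using oddE by blast
  then show "real j = 2 * real (j div 2) + 1" by simp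
qed

lemma sdelta_half:
  assumes "j < 2^(p+1)" "real j \<le> 2^(p+1)*t" "2^(p+1)*t \<le> real j + 1" "0 \<le> t"
  shows "sdelta g p t = scoef g p (j div 2 + 1) *
      (if even j then 2^p*t - real (j div 2) else real (j div 2) + 1 - 2^p*t)
           + (if p = 0 then scoef g 0 0 * t else 0)"
proof -
  define J where "J = j div 2"
  have J: "J < 2^p" using assms(1) unfolding J_def by (simp add: less_mult_imp_div_less mult.commute)
  have p2: "(2::real)^(p+1)*t = 2 * (2^p*t)" by simp
  show ?thesis
  proof (cases "even j")
    case True
    then have rj: "real j = 2 * real J" using even_odd_real J_def by auto
    have h1: "real J \<le> 2^p*t" "2^p*t \<le> real J + 1/2" using assms(2,3) rj p2 by linarith+
    have "min (2^p*t - real J) (real J + 1 - 2^p*t) = 2^p*t - real J" using h1 by simp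
    then show ?thesis using sdelta_on[OF J _ _ assms(4), of g] h1 True unfolding J_def[symmetric]
      by auto
  next
    case False
    then have rj: "real j = 2 * real J + 1" using even_odd_real J_def by auto
    have h1: "real J + 1/2 \<le> 2^p*t" "2^p*t \<le> real J + 1" using assms(2,3) rj p2 by linarith+
    have "min (2^p*t - real J) (real J + 1 - 2^p*t) = real J + 1 - 2^p*t" using h1 by simp
    then show ?thesis using sdelta_on[OF J _ _ assms(4), of g] h1 False unfolding J_def[symmetric]
      by auto
  qed
qed

lemma spart_m1: "spart g (-1) t = g 0" by (simp add: spart_def)
lemma spart_0: "spart g 0 t = g 0 + sdelta g 0 t" by (simp add: spart_def)
lemma spart_Suc: "spart g (int (Suc p)) t = spart g (int p) t + sdelta g (Suc p) t"
proof -
  have "nat (int (Suc p) + 1) = Suc (Suc p)" "nat (int p + 1) = Suc p" by simp_all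
  then show ?thesis by (simp add: spart_def)
qed

lemma scoef_pos: "1 \<le> m \<Longrightarrow> scoef g p m = 2 * g ((2*real m - 1)/2^(p+1)) - g ((real m - 1)/2^p) - g (real m/2^p)"
  by (simp add: scoef_def tt_simps)

lemma spart_interp:
  assumes "j < 2^(p+1)" "real j \<le> 2^(p+1)*t" "2^(p+1)*t \<le> real j + 1" "0 \<le> t"
  shows "spart g (int p) t = g (real j/2^(p+1)) + (2^(p+1)*t - real j) * (g ((real j+1)/2^(p+1)) - g (real j/2^(p+1)))"
  using assms
proof (induction p arbitrary: j t)
  case 0
  have sc: "scoef g 0 1 = 2 * g (1/2) - g 0 - g 1" by (simp add: scoef_pos)
  have sc0: "scoef g 0 0 = g 1 - g 0" by (simp add: scoef_def)
  have "j = 0 \<or> j = 1" using 0 by auto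
  then show ?case
  proof
    assume j: "j = 0"
    have "sdelta g 0 t = scoef g 0 1 * t + scoef g 0 0 * t" using sdelta_half[OF 0(1-4), of g] j by simp
    then show ?thesis unfolding sc sc0 using j by (simp add: spart_0 algebra_simps)
  next
    assume j: "j = 1"
    have "sdelta g 0 t = scoef g 0 1 * (1 - t) + scoef g 0 0 * t" using sdelta_half[OF 0(1-4), of g] j by simp
    then show ?thesis unfolding sc sc0 using j by (simp add: spart_0 algebra_simps)
  qed
next
  case (Suc p)
  define i where "i = j div 2"
  have p2: "(2::real)^(Suc p+1)*t = 2 * (2^(p+1)*t)" by simp
  have i: "i < 2^(p+1)" using Suc(2) unfolding i_def by (simp add: less_mult_imp_div_less mult.commute)
  have rj: "real j = 2 * real i \<or> real j = 2 * real i + 1" using even_odd_real i_def by blast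
  have h: "real i \<le> 2^(p+1)*t" "2^(p+1)*t \<le> real i + 1" using Suc(3,4) rj unfolding p2 by linarith+
  note IH = Suc.IH[OF i h Suc(5)]
  note SD = sdelta_half[OF Suc(2-5), of g, folded i_def]
  have sc: "scoef g (Suc p) (i+1) = 2 * g ((2*real i + 1)/2^(p+2)) - g (real i/2^(p+1)) - g ((real i + 1)/2^(p+1))"
    by (simp add: scoef_pos algebra_simps)
  show ?case
  proof (cases "even j")
    case True
    then have rj: "real j = 2 * real i" using even_odd_real i_def by auto
    have e1: "real j / 2^(Suc p+1) = real i / 2^(p+1)" using rj by (simp add: field_simps)
    have e2: "(real j + 1) / 2^(Suc p+1) = (2*real i + 1)/2^(p+2)" using rj by simp
    show ?thesis unfolding spart_Suc IH SD e1 e2 sc using True rj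
      by (simp add: algebra_simps)
  next
    case False
    then have rj: "real j = 2 * real i + 1" using even_odd_real i_def by auto
    have e1: "real j / 2^(Suc p+1) = (2*real i + 1)/2^(p+2)" using rj by simp
    have e2: "(real j + 1) / 2^(Suc p+1) = (real i + 1) / 2^(p+1)" using rj by (simp add: field_simps)
    show ?thesis unfolding spart_Suc IH SD e1 e2 sc using False rj
      by (simp add: algebra_simps)
  qed
qed



lemma coarsen:
  assumes "K < 2^N" "M \<le> N"
  shows "K div 2^(N-M) < 2^M" "real (K div 2^(N-M)) \<le> 2^M * (real K / 2^N)"
        "2^M * ((real K + 1)/2^N) \<le> real (K div 2^(N-M)) + 1"
proof -
  define q where "q = K div 2^(N-M)"
  have NM: "(2::nat)^N = 2^M * 2^(N-M)" using assms(2) by (simp flip: power_add)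
  have NMr: "(2::real)^N = 2^M * 2^(N-M)" using assms(2) by (simp flip: power_add)
  have pos: "(0::nat) < 2^(N-M)" by simp
  have dm: "q * 2^(N-M) + K mod 2^(N-M) = K" unfolding q_def by (rule div_mult_mod_eq)
  have mm: "K mod 2^(N-M) < 2^(N-M)" using pos by (rule mod_less_divisor)
  have q1: "q * 2^(N-M) \<le> K" using dm by linarith
  have q2: "K < (q+1) * 2^(N-M)"
  proof -
    have "(q+1)*2^(N-M) = q*2^(N-M) + (2::nat)^(N-M)" by simp
    then show ?thesis using dm mm by linarith
  qed
  show "K div 2^(N-M) < 2^M" using assms(1) NM by (simp add: less_mult_imp_div_less)
  have r1: "real q * 2^(N-M) \<le> real K"
  proof -
    from q1 have "real (q * 2^(N-M)) \<le> real K" by (simp only: of_nat_le_iff)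
    then show ?thesis by simp
  qed
  have r2: "real K + 1 \<le> (real q + 1) * 2^(N-M)"
  proof -
    have "K + 1 \<le> (q+1) * 2^(N-M)" using q2 by simp
    then have "real (K + 1) \<le> real ((q+1) * 2^(N-M))" by (simp only: of_nat_le_iff)
    then show ?thesis by (simp add: algebra_simps)
  qed
  have e: "2^M * (x / 2^N) = x / 2^(N-M)" for x :: real using NMr by (simp add: field_simps)
  show "real (K div 2^(N-M)) \<le> 2^M * (real K / 2^N)" unfolding e q_def[symmetric]
    using r1 by (simp add: field_simps)
  show "2^M * ((real K + 1)/2^N) \<le> real (K div 2^(N-M)) + 1" unfolding e q_def[symmetric]
    using r2 by (simp add: field_simps)
qed

lemma half_interval:
  assumes "real j \<le> 2^(p+1)*t" "2^(p+1)*t \<le> real j + 1"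
  shows "real (j div 2) \<le> 2^p*t" "2^p*t \<le> real (j div 2) + 1"
proof -
  have p2: "(2::real)^(p+1)*t = 2 * (2^p*t)" by simp
  have "real j = 2 * real (j div 2) \<or> real j = 2 * real (j div 2) + 1" using even_odd_real by blast
  then show "real (j div 2) \<le> 2^p*t" "2^p*t \<le> real (j div 2) + 1" using assms unfolding p2 by linarith+
qed

lemma half_index: "j < 2^(p+1) \<Longrightarrow> j div 2 < (2::nat)^p"
  by (simp add: less_mult_imp_div_less mult.commute)

lemma sdelta_lin:
  assumes "j < 2^(p+1)" "real j \<le> 2^(p+1)*t" "2^(p+1)*t \<le> real j + 1" "0 \<le> t"
     "real j \<le> 2^(p+1)*t'" "2^(p+1)*t' \<le> real j + 1" "0 \<le> t'"
  shows "sdelta g p t' - sdelta g p t = (t' - t) * ((if even j then 2^p else -(2^p)) * scoef g p (j div 2 + 1)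
           + (if p = 0 then scoef g 0 0 else 0))"
  using sdelta_half[OF assms(1-4), of g] sdelta_half[OF assms(1) assms(5-7), of g]
  by (auto simp: algebra_simps)

lemma spart_lin:
  assumes "J < 2^(q+1)" "real J \<le> 2^(q+1)*t" "2^(q+1)*t \<le> real J + 1" "0 \<le> t"
     "real J \<le> 2^(q+1)*t'" "2^(q+1)*t' \<le> real J + 1" "0 \<le> t'"
  shows "spart g (int q) t' - spart g (int q) t = (t' - t) * 2^(q+1) * (g ((real J + 1)/2^(q+1)) - g (real J/2^(q+1)))"
  using spart_interp[OF assms(1-4), of g] spart_interp[OF assms(1) assms(5-7), of g]
  by (auto simp: algebra_simps)

lemma spart_grid:
  assumes "J \<le> 2^(q+1)"
  shows "spart g (int q) (real J/2^(q+1)) = g (real J/2^(q+1))"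
proof (cases "J < 2^(q+1)")
  case True
  show ?thesis using spart_interp[OF True, of "real J/2^(q+1)" g] by simp
next
  case False
  then have J: "J = 2^(q+1)" using assms by simp
  have "2^(q+1) - 1 < (2::nat)^(q+1)" by simp
  from spart_interp[OF this, of 1 g] show ?thesis using J by (simp add: of_nat_diff)
qed

lemma spart_mid:
  assumes "J < 2^(q+1)"
  shows "spart g (int q) ((2*real J + 1)/2^(q+2)) = (g (real J/2^(q+1)) + g ((real J + 1)/2^(q+1)))/2"
proof -
  have e: "2^(q+1) * ((2*real J + 1)/2^(q+2)) = real J + 1/2" by (simp add: field_simps)
  show ?thesis using spart_interp[OF assms, of "(2*real J + 1)/2^(q+2)" g] unfolding e
    by (simp add: algebra_simps)
qed

lemma sdelta_grid0:
  assumes "1 \<le> p" "L \<le> 2^p"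
  shows "sdelta g p (real L/2^p) = 0"
proof (cases "L = 0")
  case True
  have "(0::nat) < 2^p" by simp
  from sdelta_on[OF this, of 0 g] show ?thesis using True assms by simp
next
  case False
  then have L: "L - 1 < 2^p" "real (L - 1) = real L - 1" using assms by (auto simp: of_nat_diff)
  from sdelta_on[OF L(1), of "real L/2^p" g] show ?thesis using assms L by simp
qed

lemma sdelta_zero_level:
  assumes "1 \<le> N" "N \<le> p" "L \<le> 2^N"
  shows "sdelta g p (real L/2^N) = 0"
proof -
  have e: "real L/2^N = real (L * 2^(p-N)) / 2^p"
    using assms(2) by (simp add: field_simps flip: power_add)
  have "L * 2^(p-N) \<le> 2^N * 2^(p-N)" using assms(3) by simp
  also have "\<dots> = 2^p" using assms(2) by (simp flip: power_add)
  finally show ?thesis unfolding e using assms by (intro sdelta_grid0) auto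
qed

lemma sdelta_mid:
  assumes "1 \<le> p" "1 \<le> k" "k \<le> 2^p"
  shows "sdelta g p ((2*real k - 1)/2^(p+1)) = scoef g p k / 2"
proof -
  have k: "k - 1 < 2^p" "real (k-1) = real k - 1" using assms by (auto simp: of_nat_diff)
  have e: "2^p * ((2*real k - 1)/2^(p+1)) = real k - 1/2" by (simp add: field_simps)
  from sdelta_on[OF k(1), of "(2*real k - 1)/2^(p+1)" g] show ?thesis
    using assms k unfolding e by (simp add: min_def)
qed

lemma sdelta_0_val:
  assumes "0 \<le> t" "t \<le> 1"
  shows "sdelta g 0 t = scoef g 0 1 * min t (1 - t) + scoef g 0 0 * t"
  using sdelta_on[of 0 0 t g] assms by simp



definition SM :: "nat \<Rightarrow> (real \<Rightarrow> nat \<Rightarrow> nat \<Rightarrow> real) \<Rightarrow> real \<Rightarrow> nat \<Rightarrow> nat \<Rightarrow> real" where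
  "SM p V t = (\<lambda>i j. spart (\<lambda>s. V s i j) (int p - 1) t)"
definition DV :: "nat \<Rightarrow> (real \<Rightarrow> nat \<Rightarrow> real) \<Rightarrow> real \<Rightarrow> nat \<Rightarrow> real" where
  "DV p W t = (\<lambda>j. sdelta (\<lambda>s. W s j) p t)"

lemma paraprod_SM: "paraprod k V W t i = (\<Sum>p. matvec k (SM p V t) (DV p W t) i)"
  by (simp add: paraprod_def matvec_def SM_def DV_def)

lemma paraprod_fin:
  assumes "1 \<le> N" "L \<le> 2^N"
  shows "paraprod k V W (real L/2^N) i = (\<Sum>p<N. matvec k (SM p V (real L/2^N)) (DV p W (real L/2^N)) i)"
  unfolding paraprod_SM
proof (rule suminf_finite)
  fix p assume "p \<notin> {..<N}"
  then have "N \<le> p" by simp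
  then have "DV p W (real L/2^N) = (\<lambda>j. 0)" unfolding DV_def using sdelta_zero_level assms by auto
  then show "matvec k (SM p V (real L/2^N)) (DV p W (real L/2^N)) i = 0" by (simp add: matvec_def)
qed simp

lemma prod_sd:
  assumes "\<And>i j. Ac i j - Ab i j = Ab i j - Aa i j" "\<And>j. xc j - xb j = xb j - xa j"
  shows "2 * matvec k Ab xb i - matvec k Aa xa i - matvec k Ac xc i
       = -2 * matvec k (\<lambda>i j. Ab i j - Aa i j) (\<lambda>j. xb j - xa j) i"
proof -
  have "2 * matvec k Ab xb i - matvec k Aa xa i - matvec k Ac xc i
      = (\<Sum>j<k. 2 * (Ab i j * xb j) - Aa i j * xa j - Ac i j * xc j)"
    by (simp add: matvec_def sum_distrib_left sum_subtractf)
  also have "\<dots> = (\<Sum>j<k. -2 * ((Ab i j - Aa i j) * (xb j - xa j)))"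
  proof (rule sum.cong)
    fix j
    have h1: "Ac i j = 2 * Ab i j - Aa i j" and h2: "xc j = 2 * xb j - xa j" using assms(1)[of i j] assms(2)[of j] by linarith+
    show "2 * (Ab i j * xb j) - Aa i j * xa j - Ac i j * xc j = -2 * ((Ab i j - Aa i j) * (xb j - xa j))"
      unfolding h1 h2 by (simp add: algebra_simps)
  qed simp
  finally show ?thesis by (simp add: matvec_def sum_distrib_left)
qed

lemma matvec_scale: "matvec k (\<lambda>i j. c * A i j) (\<lambda>j. c' * x j) i = c * c' * matvec k A x i"
  by (simp add: matvec_def sum_distrib_left algebra_simps)

lemma matvec_lin_right: "matvec k A (\<lambda>j. c1 * x j + c2 * y j) i = c1 * matvec k A x i + c2 * matvec k A y i"
  by (simp add: matvec_def sum_distrib_left sum.distrib algebra_simps)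

lemma matvec_zero_right: "matvec k A (\<lambda>j. 0) i = 0" by (simp add: matvec_def)



definition pa :: "nat \<Rightarrow> nat \<Rightarrow> real" where "pa r k = (real k - 1)/2^r"
definition pb :: "nat \<Rightarrow> nat \<Rightarrow> real" where "pb r k = (2*real k - 1)/2^(r+1)"
definition pc :: "nat \<Rightarrow> nat \<Rightarrow> real" where "pc r k = real k/2^r"
definition jj :: "nat \<Rightarrow> nat \<Rightarrow> nat \<Rightarrow> nat" where "jj r k p = (k - 1) div 2^(r - Suc p)"

lemma pts:
  assumes "1 \<le> k"
  shows "pb r k - pa r k = 1/2^(r+1)" "pc r k - pb r k = 1/2^(r+1)" "0 \<le> pa r k"
    "pa r k \<le> pb r k" "pb r k \<le> pc r k"
  using assms by (auto simp: pa_def pb_def pc_def field_simps)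

lemma geo:
  assumes "1 \<le> k" "k \<le> 2^r" "p < r" "pa r k \<le> t" "t \<le> pc r k"
  shows "jj r k p < 2^(p+1)" "real (jj r k p) \<le> 2^(p+1)*t" "2^(p+1)*t \<le> real (jj r k p) + 1"
proof -
  have K: "k - 1 < 2^r" using assms by simp
  have M: "p+1 \<le> r" using assms by simp
  have rk: "real (k-1) = real k - 1" using assms by (simp add: of_nat_diff)
  have e: "r - (p+1) = r - Suc p" by simp
  note C = coarsen[OF K M, unfolded e rk, folded jj_def]
  show "jj r k p < 2^(p+1)" using C(1) .
  have "2^(p+1) * pa r k \<le> 2^(p+1)*t" "2^(p+1)*t \<le> 2^(p+1) * pc r k" using assms(4,5) by simp_all
  then show "real (jj r k p) \<le> 2^(p+1)*t" "2^(p+1)*t \<le> real (jj r k p) + 1"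
    using C(2,3) unfolding pa_def pc_def by (simp_all add: rk)
qed

lemma SM_0: "SM 0 V t = V 0" by (simp add: SM_def spart_m1)

lemma SM_affine:
  assumes "1 \<le> k" "k \<le> 2^r" "p < r"
  shows "SM p V (pc r k) i j - SM p V (pb r k) i j = SM p V (pb r k) i j - SM p V (pa r k) i j"
proof (cases p)
  case 0 then show ?thesis by (simp add: SM_0)
next
  case (Suc q)
  note P = pts[OF assms(1), of r]
  have G: "real (jj r k p) \<le> 2^(p+1)*t \<and> 2^(p+1)*t \<le> real (jj r k p) + 1" if "t \<in> {pa r k, pb r k, pc r k}" for t
    using geo[OF assms, of t] that P by auto
  define J where "J = jj r k p div 2"
  have J: "J < 2^(q+1)" using half_index[of "jj r k p" p] geo[OF assms, of "pa r k"] P Suc unfolding J_def by simp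
  have H: "real J \<le> 2^(q+1)*t \<and> 2^(q+1)*t \<le> real J + 1" if "t \<in> {pa r k, pb r k, pc r k}" for t
    using half_interval[of "jj r k p" p t] G[OF that] Suc unfolding J_def by simp
  have e: "int p - 1 = int q" using Suc by simp
  have Ha: "real J \<le> 2^(q+1)*pa r k" "2^(q+1)*pa r k \<le> real J + 1" using H[of "pa r k"] by auto
  have Hb: "real J \<le> 2^(q+1)*pb r k" "2^(q+1)*pb r k \<le> real J + 1" using H[of "pb r k"] by auto
  have Hc: "real J \<le> 2^(q+1)*pc r k" "2^(q+1)*pc r k \<le> real J + 1" using H[of "pc r k"] by auto
  have nb: "0 \<le> pb r k" "0 \<le> pc r k" using P by linarith+
  note d1 = spart_lin[OF J Ha P(3) Hb nb(1), of "\<lambda>s. V s i j"]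
  note d2 = spart_lin[OF J Hb nb(1) Hc nb(2), of "\<lambda>s. V s i j"]
  show ?thesis unfolding SM_def e d1 d2 using P(1,2) by simp
qed

lemma DV_affine:
  assumes "1 \<le> k" "k \<le> 2^r" "p < r"
  shows "DV p W (pc r k) j - DV p W (pb r k) j = DV p W (pb r k) j - DV p W (pa r k) j"
proof -
  note P = pts[OF assms(1), of r]
  have G: "real (jj r k p) \<le> 2^(p+1)*t \<and> 2^(p+1)*t \<le> real (jj r k p) + 1" if "t \<in> {pa r k, pb r k, pc r k}" for t
    using geo[OF assms, of t] that P by auto
  have j: "jj r k p < 2^(p+1)" using geo[OF assms, of "pa r k"] P by simp
  have Ha: "real (jj r k p) \<le> 2^(p+1)*pa r k" "2^(p+1)*pa r k \<le> real (jj r k p) + 1" using G[of "pa r k"] by auto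
  have Hb: "real (jj r k p) \<le> 2^(p+1)*pb r k" "2^(p+1)*pb r k \<le> real (jj r k p) + 1" using G[of "pb r k"] by auto
  have Hc: "real (jj r k p) \<le> 2^(p+1)*pc r k" "2^(p+1)*pc r k \<le> real (jj r k p) + 1" using G[of "pc r k"] by auto
  have nb: "0 \<le> pb r k" "0 \<le> pc r k" using P by linarith+
  note d1 = sdelta_lin[OF j Ha P(3) Hb nb(1), of "\<lambda>s. W s j"]
  note d2 = sdelta_lin[OF j Hb nb(1) Hc nb(2), of "\<lambda>s. W s j"]
  show ?thesis unfolding DV_def d1 d2 using P(1,2) by simp
qed

lemma vcoef_pos: "1 \<le> k \<Longrightarrow> vcoef F r k i = 2 * F (pb r k) i - F (pa r k) i - F (pc r k) i"
  by (simp add: vcoef_def scoef_pos pa_def pb_def pc_def)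

lemma gen_coef:
  assumes "1 \<le> k" "k \<le> 2^r"
  shows "vcoef (paraprod kk V W) r k i = matvec kk (SM r V (pb r k)) (vcoef W r k) i
     + (\<Sum>p<r. -2 * matvec kk (\<lambda>i j. SM p V (pb r k) i j - SM p V (pa r k) i j)
                              (\<lambda>j. DV p W (pb r k) j - DV p W (pa r k) j) i)"
proof -
  define T where "T p t = matvec kk (SM p V t) (DV p W t) i" for p t
  have ea: "pa r k = real (2*k-2)/2^(r+1)" using assms(1) by (simp add: pa_def of_nat_diff field_simps)
  have eb: "pb r k = real (2*k-1)/2^(r+1)" using assms(1) by (simp add: pb_def of_nat_diff)
  have ec: "pc r k = real (2*k)/2^(r+1)" by (simp add: pc_def field_simps)
  have l: "2*k-2 \<le> 2^(r+1)" "2*k-1 \<le> 2^(r+1)" "2*k \<le> 2^(r+1)" using assms(2) by simp_all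
  have Pa: "paraprod kk V W (pa r k) i = (\<Sum>p<r+1. T p (pa r k))"
    unfolding T_def ea by (rule paraprod_fin) (use l in auto)
  have Pb: "paraprod kk V W (pb r k) i = (\<Sum>p<r+1. T p (pb r k))"
    unfolding T_def eb by (rule paraprod_fin) (use l in auto)
  have Pc: "paraprod kk V W (pc r k) i = (\<Sum>p<r+1. T p (pc r k))"
    unfolding T_def ec by (rule paraprod_fin) (use l in auto)
  have "vcoef (paraprod kk V W) r k i = (\<Sum>p<r+1. 2 * T p (pb r k) - T p (pa r k) - T p (pc r k))"
    unfolding vcoef_pos[OF assms(1)] Pa Pb Pc by (simp add: sum_subtractf sum_distrib_left)
  also have "\<dots> = (\<Sum>p<r. 2 * T p (pb r k) - T p (pa r k) - T p (pc r k)) + (2 * T r (pb r k) - T r (pa r k) - T r (pc r k))"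
    by simp
  also have "(\<Sum>p<r. 2 * T p (pb r k) - T p (pa r k) - T p (pc r k)) =
     (\<Sum>p<r. -2 * matvec kk (\<lambda>i j. SM p V (pb r k) i j - SM p V (pa r k) i j)
                              (\<lambda>j. DV p W (pb r k) j - DV p W (pa r k) j) i)"
  proof (rule sum.cong)
    fix p assume "p \<in> {..<r}"
    then have p: "p < r" by simp
    show "2 * T p (pb r k) - T p (pa r k) - T p (pc r k) = -2 * matvec kk (\<lambda>i j. SM p V (pb r k) i j - SM p V (pa r k) i j)
                              (\<lambda>j. DV p W (pb r k) j - DV p W (pa r k) j) i"
      unfolding T_def by (rule prod_sd) (use SM_affine[OF assms p] DV_affine[OF assms p] in auto)
  qed simp
  also have "2 * T r (pb r k) - T r (pa r k) - T r (pc r k) = matvec kk (SM r V (pb r k)) (vcoef W r k) i"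
  proof (cases r)
    case 0
    then have k: "k = 1" using assms by simp
    have pts0: "pa r k = 0" "pb r k = 1/2" "pc r k = 1" using 0 k by (simp_all add: pa_def pb_def pc_def)
    have "2 * DV 0 W (1/2) j - DV 0 W 0 j - DV 0 W 1 j = vcoef W 0 1 j" for j
      unfolding DV_def vcoef_def using sdelta_0_val[of "1/2"] sdelta_0_val[of 0] sdelta_0_val[of 1]
      by simp
    then have "matvec kk (V 0) (\<lambda>j. 2 * DV 0 W (1/2) j - DV 0 W 0 j - DV 0 W 1 j) i = matvec kk (V 0) (vcoef W r k) i"
      using 0 k by simp
    moreover have "2 * T r (pb r k) - T r (pa r k) - T r (pc r k) = matvec kk (V 0) (\<lambda>j. 2 * DV 0 W (1/2) j - DV 0 W 0 j - DV 0 W 1 j) i"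
      unfolding T_def pts0 unfolding 0 SM_0 matvec_def by (simp add: sum_distrib_left sum_subtractf sum.distrib algebra_simps)
    moreover have "SM r V (pb r k) = V 0" using 0 SM_0 by simp
    ultimately show ?thesis by simp
  next
    case (Suc q)
    then have r1: "1 \<le> r" by simp
    have za: "DV r W (pa r k) = (\<lambda>j. 0)"
    proof -
      have "pa r k = real (k-1)/2^r" using assms(1) by (simp add: pa_def of_nat_diff)
      then show ?thesis unfolding DV_def using sdelta_grid0[OF r1, of "k-1"] assms by auto
    qed
    have zc: "DV r W (pc r k) = (\<lambda>j. 0)"
      unfolding DV_def pc_def using sdelta_grid0[OF r1, of k] assms by auto
    have mb: "DV r W (pb r k) = (\<lambda>j. 1/2 * vcoef W r k j)"
      unfolding DV_def pb_def vcoef_def using sdelta_mid[OF r1 assms] by auto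
    show ?thesis unfolding T_def za zc mb matvec_def by (simp add: sum_distrib_left algebra_simps)
  qed
  finally show ?thesis by simp
qed



lemma vnorm_L2: "vnorm k x = L2_set x {..<k}"
  by (simp add: vnorm_def L2_set_def)

lemma vnorm_nonneg[simp]: "0 \<le> vnorm k x" by (simp add: vnorm_L2)

lemma vnorm_add: "vnorm k (\<lambda>i. x i + y i) \<le> vnorm k x + vnorm k y"
  unfolding vnorm_L2 by (rule L2_set_triangle_ineq)

lemma vnorm_scale: "vnorm k (\<lambda>i. c * x i) = \<bar>c\<bar> * vnorm k x"
proof -
  have "vnorm k (\<lambda>i. c * x i) = vnorm k (\<lambda>i. \<bar>c\<bar> * x i)"
    by (simp add: vnorm_def power_mult_distrib)
  also have "\<dots> = \<bar>c\<bar> * vnorm k x" unfolding vnorm_L2 by (simp add: L2_set_right_distrib)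
  finally show ?thesis .
qed

lemma vnorm_cong: "(\<And>i. i < k \<Longrightarrow> x i = y i) \<Longrightarrow> vnorm k x = vnorm k y"
  by (simp add: vnorm_def)

lemma vnorm_zero[simp]: "vnorm k (\<lambda>i. 0) = 0" by (simp add: vnorm_def)

lemma vnorm_minus: "vnorm k (\<lambda>i. - x i) = vnorm k x"
  using vnorm_scale[of k "-1" x] by simp

lemma vnorm_diff: "vnorm k (\<lambda>i. x i - y i) \<le> vnorm k x + vnorm k y"
  using vnorm_add[of k x "\<lambda>i. - y i"] vnorm_minus[of k y] by simp

lemma vnorm_sum: "finite A \<Longrightarrow> vnorm k (\<lambda>i. \<Sum>p\<in>A. f p i) \<le> (\<Sum>p\<in>A. vnorm k (f p))"
proof (induction A rule: finite_induct)
  case empty then show ?case by simp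
next
  case (insert a A)
  have "vnorm k (\<lambda>i. \<Sum>p\<in>insert a A. f p i) = vnorm k (\<lambda>i. f a i + (\<Sum>p\<in>A. f p i))"
    using insert by simp
  also have "\<dots> \<le> vnorm k (f a) + vnorm k (\<lambda>i. \<Sum>p\<in>A. f p i)" by (rule vnorm_add)
  also have "\<dots> \<le> vnorm k (f a) + (\<Sum>p\<in>A. vnorm k (f p))" using insert by simp
  finally show ?case using insert by simp
qed

lemma abs_le_vnorm: "j < k \<Longrightarrow> \<bar>x j\<bar> \<le> vnorm k x"
proof -
  assume j: "j < k"
  have "\<bar>x j\<bar> \<le> L2_set (\<lambda>i. \<bar>x i\<bar>) {..<k}" using j by (intro member_le_L2_set) auto
  also have "\<dots> = vnorm k x" by (simp add: vnorm_def L2_set_def)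
  finally show ?thesis .
qed

definition frob :: "nat \<Rightarrow> nat \<Rightarrow> (nat \<Rightarrow> nat \<Rightarrow> real) \<Rightarrow> real" where
  "frob m n A = (\<Sum>i<m. \<Sum>j<n. \<bar>A i j\<bar>)"

lemma matvec_frob: "vnorm m (matvec n A x) \<le> frob m n A * vnorm n x"
proof -
  have "vnorm m (matvec n A x) \<le> (\<Sum>i<m. \<bar>matvec n A x i\<bar>)"
    unfolding vnorm_L2 by (rule L2_set_le_sum_abs)
  also have "\<dots> \<le> (\<Sum>i<m. \<Sum>j<n. \<bar>A i j\<bar> * vnorm n x)"
  proof (rule sum_mono)
    fix i
    have "\<bar>matvec n A x i\<bar> \<le> (\<Sum>j<n. \<bar>A i j * x j\<bar>)" unfolding matvec_def by (rule sum_abs)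
    also have "\<dots> \<le> (\<Sum>j<n. \<bar>A i j\<bar> * vnorm n x)"
      by (rule sum_mono) (auto simp: abs_mult intro: mult_left_mono abs_le_vnorm)
    finally show "\<bar>matvec n A x i\<bar> \<le> (\<Sum>j<n. \<bar>A i j\<bar> * vnorm n x)" .
  qed
  also have "\<dots> = frob m n A * vnorm n x" by (simp add: frob_def sum_distrib_right)
  finally show ?thesis .
qed

lemma frob_nonneg: "0 \<le> frob m n A" by (simp add: frob_def sum_nonneg)

lemma opnorm_set_bdd: "bdd_above {vnorm m (matvec n A x) | x. vnorm n x \<le> 1}"
proof (rule bdd_aboveI)
  fix y assume "y \<in> {vnorm m (matvec n A x) | x. vnorm n x \<le> 1}"
  then obtain x where "y = vnorm m (matvec n A x)" "vnorm n x \<le> 1" by auto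
  then show "y \<le> frob m n A"
    using matvec_frob[of m n A x] frob_nonneg[of m n A] mult_left_le[of "vnorm n x" "frob m n A"] by simp
qed

lemma opnorm_upper: "vnorm n x \<le> 1 \<Longrightarrow> vnorm m (matvec n A x) \<le> opnorm m n A"
  unfolding opnorm_def by (rule cSup_upper) (use opnorm_set_bdd in auto)

lemma opnorm_nonneg: "0 \<le> opnorm m n A"
  using opnorm_upper[of n "\<lambda>i. 0" m A] by (simp add: matvec_def)

lemma opnorm_le_frob: "opnorm m n A \<le> frob m n A"
  unfolding opnorm_def
proof (rule cSup_least)
  show "{vnorm m (matvec n A x) | x. vnorm n x \<le> 1} \<noteq> {}" by (auto intro!: exI[of _ "\<lambda>i. 0"])
next
  fix y assume "y \<in> {vnorm m (matvec n A x) | x. vnorm n x \<le> 1}"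
  then obtain x where "y = vnorm m (matvec n A x)" "vnorm n x \<le> 1" by auto
  then show "y \<le> frob m n A"
    using matvec_frob[of m n A x] frob_nonneg[of m n A] mult_left_le[of "vnorm n x" "frob m n A"] by simp
qed

lemma matvec_scale_right: "matvec n A (\<lambda>j. c * x j) = (\<lambda>i. c * matvec n A x i)"
  by (simp add: matvec_def sum_distrib_left algebra_simps)

lemma matvec_opnorm: "vnorm m (matvec n A x) \<le> opnorm m n A * vnorm n x"
proof (cases "vnorm n x = 0")
  case True
  then show ?thesis using matvec_frob[of m n A x] opnorm_nonneg[of m n A] by simp
next
  case False
  define c where "c = vnorm n x"
  have c: "c > 0" using False c_def vnorm_nonneg[of n x] by linarith
  define x' where "x' = (\<lambda>j. (1/c) * x j)"
  have "vnorm n x' = \<bar>1/c\<bar> * c" unfolding x'_def vnorm_scale c_def ..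
  then have "vnorm n x' = 1" using c by simp
  then have "vnorm m (matvec n A x') \<le> opnorm m n A" by (intro opnorm_upper) simp
  moreover have "vnorm m (matvec n A x') = (1/c) * vnorm m (matvec n A x)"
    unfolding x'_def matvec_scale_right vnorm_scale using c by simp
  ultimately have "(1/c) * vnorm m (matvec n A x) \<le> opnorm m n A" by simp
  then show ?thesis using c unfolding c_def[symmetric] by (simp add: field_simps)
qed

definition opb :: "nat \<Rightarrow> nat \<Rightarrow> (nat \<Rightarrow> nat \<Rightarrow> real) \<Rightarrow> real \<Rightarrow> bool" where
  "opb m n A K \<longleftrightarrow> (\<forall>x. vnorm m (matvec n A x) \<le> K * vnorm n x)"

lemma opbD: "opb m n A K \<Longrightarrow> vnorm m (matvec n A x) \<le> K * vnorm n x"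
  by (simp add: opb_def)

lemma opb_opnorm: "opb m n A (opnorm m n A)"
  by (simp add: opb_def matvec_opnorm)

lemma opb_mono: "opb m n A K \<Longrightarrow> K \<le> K' \<Longrightarrow> opb m n A K'"
  unfolding opb_def using mult_right_mono[of K K'] vnorm_nonneg order.trans by metis

lemma matvec_add_left: "matvec n (\<lambda>i j. A i j + B i j) x = (\<lambda>i. matvec n A x i + matvec n B x i)"
  by (simp add: matvec_def algebra_simps sum.distrib)
lemma matvec_sub_left: "matvec n (\<lambda>i j. A i j - B i j) x = (\<lambda>i. matvec n A x i - matvec n B x i)"
  by (simp add: matvec_def algebra_simps sum_subtractf)
lemma matvec_scale_left: "matvec n (\<lambda>i j. c * A i j) x = (\<lambda>i. c * matvec n A x i)"
  by (simp add: matvec_def sum_distrib_left algebra_simps)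
lemma matvec_sum_left: "matvec n (\<lambda>i j. \<Sum>p\<in>P. A p i j) x = (\<lambda>i. \<Sum>p\<in>P. matvec n (A p) x i)"
  by (simp add: matvec_def sum_distrib_right sum.swap[of _ "{..<n}"])

lemma opb_add: "opb m n A K1 \<Longrightarrow> opb m n B K2 \<Longrightarrow> opb m n (\<lambda>i j. A i j + B i j) (K1 + K2)"
  unfolding opb_def matvec_add_left
proof
  fix x assume h1: "\<forall>x. vnorm m (matvec n A x) \<le> K1 * vnorm n x" and h2: "\<forall>x. vnorm m (matvec n B x) \<le> K2 * vnorm n x"
  have "vnorm m (\<lambda>i. matvec n A x i + matvec n B x i) \<le> vnorm m (matvec n A x) + vnorm m (matvec n B x)"
    by (rule vnorm_add)
  also have "\<dots> \<le> K1 * vnorm n x + K2 * vnorm n x" using h1 h2 by (intro add_mono) auto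
  finally show "vnorm m (\<lambda>i. matvec n A x i + matvec n B x i) \<le> (K1 + K2) * vnorm n x" by (simp add: distrib_right)
qed

lemma opb_sub: "opb m n A K1 \<Longrightarrow> opb m n B K2 \<Longrightarrow> opb m n (\<lambda>i j. A i j - B i j) (K1 + K2)"
  unfolding opb_def matvec_sub_left
proof
  fix x assume h1: "\<forall>x. vnorm m (matvec n A x) \<le> K1 * vnorm n x" and h2: "\<forall>x. vnorm m (matvec n B x) \<le> K2 * vnorm n x"
  have "vnorm m (\<lambda>i. matvec n A x i - matvec n B x i) \<le> vnorm m (matvec n A x) + vnorm m (matvec n B x)"
    by (rule vnorm_diff)
  also have "\<dots> \<le> K1 * vnorm n x + K2 * vnorm n x" using h1 h2 by (intro add_mono) auto
  finally show "vnorm m (\<lambda>i. matvec n A x i - matvec n B x i) \<le> (K1 + K2) * vnorm n x" by (simp add: distrib_right)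
qed

lemma opb_scale: "opb m n A K \<Longrightarrow> opb m n (\<lambda>i j. c * A i j) (\<bar>c\<bar> * K)"
  unfolding opb_def matvec_scale_left vnorm_scale
proof
  fix x assume h: "\<forall>x. vnorm m (matvec n A x) \<le> K * vnorm n x"
  have "\<bar>c\<bar> * vnorm m (matvec n A x) \<le> \<bar>c\<bar> * (K * vnorm n x)" using h by (simp add: mult_left_mono)
  then show "\<bar>c\<bar> * vnorm m (matvec n A x) \<le> \<bar>c\<bar> * K * vnorm n x" by (simp add: mult.assoc)
qed

lemma opb_sum: "finite P \<Longrightarrow> (\<And>p. p \<in> P \<Longrightarrow> opb m n (A p) (K p)) \<Longrightarrow> opb m n (\<lambda>i j. \<Sum>p\<in>P. A p i j) (\<Sum>p\<in>P. K p)"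
proof -
  assume fin: "finite P" and h: "\<And>p. p \<in> P \<Longrightarrow> opb m n (A p) (K p)"
  show ?thesis unfolding opb_def matvec_sum_left
  proof
    fix x
    have "vnorm m (\<lambda>i. \<Sum>p\<in>P. matvec n (A p) x i) \<le> (\<Sum>p\<in>P. vnorm m (matvec n (A p) x))"
      using vnorm_sum[OF fin] by simp
    also have "\<dots> \<le> (\<Sum>p\<in>P. K p * vnorm n x)" using h by (intro sum_mono) (simp add: opb_def)
    finally show "vnorm m (\<lambda>i. \<Sum>p\<in>P. matvec n (A p) x i) \<le> (\<Sum>p\<in>P. K p) * vnorm n x"
      by (simp add: sum_distrib_right)
  qed
qed

lemma matvec_matmul: "matvec d (matmul n A B) x i = matvec n A (matvec d B x) i"
  by (simp add: matvec_def matmul_def sum_distrib_left sum_distrib_right sum.swap[of _ "{..<d}"] algebra_simps)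

lemma opb_comp: "opb m n A K1 \<Longrightarrow> opb n d B K2 \<Longrightarrow> 0 \<le> K1 \<Longrightarrow> opb m d (matmul n A B) (K1 * K2)"
  unfolding opb_def
proof
  fix x assume h1: "\<forall>x. vnorm m (matvec n A x) \<le> K1 * vnorm n x" and h2: "\<forall>x. vnorm n (matvec d B x) \<le> K2 * vnorm d x"
    and K1: "0 \<le> K1"
  have "matvec d (matmul n A B) x = matvec n A (matvec d B x)" using matvec_matmul by blast
  then have "vnorm m (matvec d (matmul n A B) x) \<le> K1 * vnorm n (matvec d B x)" using h1 by simp
  also have "\<dots> \<le> K1 * (K2 * vnorm d x)" using h2 K1 by (simp add: mult_left_mono)
  finally show "vnorm m (matvec d (matmul n A B) x) \<le> K1 * K2 * vnorm d x" by simp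
qed



lemma geo_sum:
  assumes "0 < \<gamma>"
  shows "(\<Sum>p<r. 2 powr (real p * \<gamma>)) \<le> 2 powr (real r * \<gamma>) / (2 powr \<gamma> - 1)"
proof -
  define x where "x = (2::real) powr \<gamma>"
  have x1: "x > 1" unfolding x_def using assms by simp
  have e: "2 powr (real p * \<gamma>) = x ^ p" for p
    unfolding x_def by (simp add: powr_power mult.commute)
  have "(\<Sum>p<r. 2 powr (real p * \<gamma>)) = (x^r - 1)/(x - 1)" unfolding e
    using x1 by (intro geometric_sum) simp
  also have "\<dots> \<le> x^r/(x-1)" using x1 by (intro divide_right_mono) auto
  finally show ?thesis unfolding e x_def by simp
qed

lemma pow2_powr: "(2::real)^p = 2 powr (real p)" by (simp add: powr_realpow)

lemma dSM_form:
  assumes "1 \<le> k" "k \<le> 2^r" "p < r" "1 \<le> p"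
  shows "(\<lambda>i j. SM p V (pb r k) i j - SM p V (pa r k) i j)
       = (\<lambda>i j. (2^p/2^(r+1)) * (V ((real (jj r k p div 2) + 1)/2^p) i j - V (real (jj r k p div 2)/2^p) i j))"
proof -
  obtain q where Suc: "p = Suc q" using assms(4) by (cases p) auto
  note P = pts[OF assms(1), of r]
  have G: "real (jj r k p) \<le> 2^(p+1)*t \<and> 2^(p+1)*t \<le> real (jj r k p) + 1" if "t \<in> {pa r k, pb r k, pc r k}" for t
    using geo[OF assms(1-3), of t] that P by auto
  define J where "J = jj r k p div 2"
  have J: "J < 2^(q+1)" using half_index[of "jj r k p" p] geo[OF assms(1-3), of "pa r k"] P Suc unfolding J_def by simp
  have H: "real J \<le> 2^(q+1)*t \<and> 2^(q+1)*t \<le> real J + 1" if "t \<in> {pa r k, pb r k, pc r k}" for t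
    using half_interval[of "jj r k p" p t] G[OF that] Suc unfolding J_def by simp
  have e: "int p - 1 = int q" using Suc by simp
  have Ha: "real J \<le> 2^(q+1)*pa r k" "2^(q+1)*pa r k \<le> real J + 1" using H[of "pa r k"] by auto
  have Hb: "real J \<le> 2^(q+1)*pb r k" "2^(q+1)*pb r k \<le> real J + 1" using H[of "pb r k"] by auto
  have nb: "0 \<le> pb r k" using P by linarith
  show ?thesis
  proof (intro ext)
    fix i j
    note d1 = spart_lin[OF J Ha P(3) Hb nb, of "\<lambda>s. V s i j"]
    show "SM p V (pb r k) i j - SM p V (pa r k) i j =
        (2^p/2^(r+1)) * (V ((real (jj r k p div 2) + 1)/2^p) i j - V (real (jj r k p div 2)/2^p) i j)"
      unfolding SM_def e d1 P(1) J_def[symmetric] using Suc by simp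
  qed
qed

lemma dDV_form:
  assumes "1 \<le> k" "k \<le> 2^r" "p < r" "1 \<le> p"
  shows "(\<lambda>j. DV p W (pb r k) j - DV p W (pa r k) j)
       = (\<lambda>j. ((if even (jj r k p) then 1 else -1) * 2^p/2^(r+1)) * vcoef W p (jj r k p div 2 + 1) j)"
proof -
  note P = pts[OF assms(1), of r]
  have G: "real (jj r k p) \<le> 2^(p+1)*t \<and> 2^(p+1)*t \<le> real (jj r k p) + 1" if "t \<in> {pa r k, pb r k, pc r k}" for t
    using geo[OF assms(1-3), of t] that P by auto
  have j: "jj r k p < 2^(p+1)" using geo[OF assms(1-3), of "pa r k"] P by simp
  have Ha: "real (jj r k p) \<le> 2^(p+1)*pa r k" "2^(p+1)*pa r k \<le> real (jj r k p) + 1" using G[of "pa r k"] by auto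
  have Hb: "real (jj r k p) \<le> 2^(p+1)*pb r k" "2^(p+1)*pb r k \<le> real (jj r k p) + 1" using G[of "pb r k"] by auto
  have nb: "0 \<le> pb r k" using P by linarith
  show ?thesis
  proof (intro ext)
    fix j'
    note d1 = sdelta_lin[OF j Ha P(3) Hb nb, of "\<lambda>s. W s j'"]
    show "DV p W (pb r k) j' - DV p W (pa r k) j' =
      ((if even (jj r k p) then 1 else -1) * 2^p/2^(r+1)) * vcoef W p (jj r k p div 2 + 1) j'"
      unfolding DV_def d1 P(1) vcoef_def using assms(4) by simp
  qed
qed

lemma JJ_bound:
  assumes "1 \<le> k" "k \<le> 2^r" "p < r"
  shows "jj r k p div 2 < 2^p"
  using half_index[of "jj r k p" p] geo[OF assms, of "pa r k"] pts[OF assms(1), of r] by simp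

definition Cv :: "real \<Rightarrow> real" where "Cv a = 1 + 1/(2 powr (1 - a) - 1)"

lemma Cv_pos: "a < 1 \<Longrightarrow> 0 < Cv a"
proof -
  assume "a < 1"
  then have "2 powr (1 - a) > 1" by simp
  then show ?thesis unfolding Cv_def by (simp add: add_pos_pos)
qed

lemma incr_v:
  assumes Vb: "\<And>p q. q \<le> 2^p \<Longrightarrow> opb n d (mcoef v p q) (V * 2 powr (-(real p * \<alpha>)))"
    and V: "0 \<le> V" and a: "0 < \<alpha>" "\<alpha> < 1"
    and q: "1 \<le> q" "J < 2^q"
  shows "opb n d (\<lambda>i j. v ((real J+1)/2^q) i j - v (real J/2^q) i j) (Cv \<alpha> * V * 2 powr (-(real q*\<alpha>)))"
proof -
  obtain q0 where q0: "q = Suc q0" using q(1) by (cases q) auto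
  define e1 where "e1 = real J/2^q"
  define e2 where "e2 = (real J+1)/2^q"
  define jq where "jq q' = J div 2^(q - Suc q')" for q'
  define sg where "sg q' = (if even (jq q') then 1 else -1::real)" for q'
  have gridv: "spart g (int q0) e = g e" if "e = real L/2^q" "L \<le> 2^q" for g e L
    using spart_grid[of L q0 g] that q0 by simp
  have Jl: "J \<le> 2^q" "J + 1 \<le> 2^q" using q by simp_all
  have e2': "e2 = real (J+1)/2^q" unfolding e2_def by simp
  have sp: "spart g (int q0) t = g 0 + (\<Sum>q'<q. sdelta g q' t)" for g t
  proof -
    have "nat (int q0 + 1) = q" using q0 by simp
    then show ?thesis by (simp add: spart_def)
  qed
  have lin: "sdelta g q' e2 - sdelta g q' e1 = (1/2^q) * (sg q' * 2^q' * scoef g q' (jq q' div 2 + 1) + (if q' = 0 then scoef g 0 0 else 0))"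
    if "q' < q" for g q'
  proof -
    have M: "q'+1 \<le> q" using that by simp
    have e: "q - (q'+1) = q - Suc q'" by simp
    note C = coarsen[OF q(2) M, unfolded e, folded jq_def]
    have n: "0 \<le> e1" "0 \<le> e2" unfolding e1_def e2_def by simp_all
    have le: "e1 \<le> e2" unfolding e1_def e2_def by (simp add: divide_right_mono)
    have h1: "real (jq q') \<le> 2^(q'+1)*e1" using C(2) unfolding e1_def by simp
    have h2: "2^(q'+1)*e2 \<le> real (jq q') + 1" using C(3) unfolding e2_def by simp
    have h3: "2^(q'+1)*e1 \<le> real (jq q') + 1" using h2 le by (smt (verit) mult_left_mono zero_le_power)
    have h4: "real (jq q') \<le> 2^(q'+1)*e2" using h1 le by (smt (verit) mult_left_mono zero_le_power)
    have "e2 - e1 = 1/2^q" unfolding e1_def e2_def by (simp add: field_simps)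
    then show ?thesis using sdelta_lin[OF C(1) h1 h3 n(1) h4 h2 n(2), of g] unfolding sg_def by simp
  qed
  have eq: "(\<lambda>i j. v e2 i j - v e1 i j) = (\<lambda>i j. \<Sum>q'<q. (1/2^q) * ((sg q' * 2^q') * mcoef v q' (jq q' div 2 + 1) i j
                + (if q' = 0 then 1 else 0) * mcoef v 0 0 i j))"
  proof (intro ext)
    fix i j
    have "v e2 i j - v e1 i j = spart (\<lambda>s. v s i j) (int q0) e2 - spart (\<lambda>s. v s i j) (int q0) e1"
      using gridv[OF e2' Jl(2)] gridv[OF e1_def Jl(1)] by simp
    also have "\<dots> = (\<Sum>q'<q. sdelta (\<lambda>s. v s i j) q' e2 - sdelta (\<lambda>s. v s i j) q' e1)"
      unfolding sp by (simp add: sum_subtractf)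
    also have "\<dots> = (\<Sum>q'<q. (1/2^q) * ((sg q' * 2^q') * mcoef v q' (jq q' div 2 + 1) i j
                + (if q' = 0 then 1 else 0) * mcoef v 0 0 i j))"
      by (rule sum.cong) (auto simp: lin mcoef_def)
    finally show "v e2 i j - v e1 i j = (\<Sum>q'<q. (1/2^q) * ((sg q' * 2^q') * mcoef v q' (jq q' div 2 + 1) i j
                + (if q' = 0 then 1 else 0) * mcoef v 0 0 i j))" .
  qed
  define K where "K q' = (1/2^q) * (2^q' * (V * 2 powr (-(real q' * \<alpha>))) + (if q' = 0 then 1 else 0) * V)" for q'
  have opbK: "opb n d (\<lambda>i j. \<Sum>q'<q. (1/2^q) * ((sg q' * 2^q') * mcoef v q' (jq q' div 2 + 1) i j
                + (if q' = 0 then 1 else 0) * mcoef v 0 0 i j)) (\<Sum>q'<q. K q')"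
  proof (rule opb_sum)
    fix q' assume "q' \<in> {..<q}"
    then have qq: "q' < q" by simp
    have M: "jq q' div 2 + 1 \<le> 2^q'"
    proof -
      have "q'+1 \<le> q" using qq by simp
      from coarsen(1)[OF q(2) this] have "jq q' < 2^(q'+1)" unfolding jq_def by simp
      then have "jq q' div 2 < 2^q'" by (rule half_index)
      then show ?thesis by simp
    qed
    have s: "\<bar>sg q' * 2^q'\<bar> = 2^q'" unfolding sg_def by simp
    have o1: "opb n d (\<lambda>i j. (sg q' * 2^q') * mcoef v q' (jq q' div 2 + 1) i j) (2^q' * (V * 2 powr (-(real q' * \<alpha>))))"
      using opb_scale[OF Vb[OF M], of "sg q' * 2^q'"] s by simp
    have o2: "opb n d (\<lambda>i j. (if q' = 0 then 1 else 0) * mcoef v 0 0 i j) ((if q' = 0 then 1 else 0) * V)"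
      using opb_scale[OF Vb[of 0 0], of "if q' = 0 then 1 else 0"] by simp
    show "opb n d (\<lambda>i j. (1/2^q) * ((sg q' * 2^q') * mcoef v q' (jq q' div 2 + 1) i j
                + (if q' = 0 then 1 else 0) * mcoef v 0 0 i j)) (K q')"
      using opb_scale[OF opb_add[OF o1 o2], of "1/2^q"] unfolding K_def by simp
  qed simp
  have Ksum: "(\<Sum>q'<q. K q') = (V/2^q) * (\<Sum>q'<q. 2 powr (real q' * (1 - \<alpha>))) + V/2^q"
  proof -
    have "K q' = (V/2^q) * 2 powr (real q' * (1 - \<alpha>)) + (if q' = 0 then V/2^q else 0)" for q'
    proof -
      have "(2::real)^q' * 2 powr (-(real q' * \<alpha>)) = 2 powr (real q' * (1 - \<alpha>))"
        unfolding pow2_powr by (simp add: powr_add[symmetric] algebra_simps)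
      then show ?thesis unfolding K_def by (simp add: algebra_simps)
    qed
    then have "(\<Sum>q'<q. K q') = (\<Sum>q'<q. (V/2^q) * 2 powr (real q' * (1 - \<alpha>))) + (\<Sum>q'<q. (if q' = 0 then V/2^q else 0))"
      by (simp add: sum.distrib)
    also have "(\<Sum>q'<q. (if q' = 0 then V/2^q else 0)) = V/2^q" using q(1) by (simp add: sum.delta)
    finally show ?thesis by (simp add: sum_distrib_left)
  qed
  have bound: "(\<Sum>q'<q. K q') \<le> Cv \<alpha> * V * 2 powr (-(real q*\<alpha>))"
  proof -
    have g: "(\<Sum>q'<q. 2 powr (real q' * (1 - \<alpha>))) \<le> 2 powr (real q * (1 - \<alpha>)) / (2 powr (1 - \<alpha>) - 1)"
      by (rule geo_sum) (use a in simp)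
    have VV: "0 \<le> V/2^q" using V by simp
    have "(\<Sum>q'<q. K q') \<le> (V/2^q) * (2 powr (real q * (1 - \<alpha>)) / (2 powr (1 - \<alpha>) - 1)) + V/2^q"
      unfolding Ksum using mult_left_mono[OF g VV] by simp
    also have "(V/2^q) * (2 powr (real q * (1 - \<alpha>)) / (2 powr (1 - \<alpha>) - 1)) = V * 2 powr (-(real q*\<alpha>)) * (1/(2 powr (1 - \<alpha>) - 1))"
    proof -
      have "2 powr (real q * (1 - \<alpha>)) / 2^q = 2 powr (-(real q*\<alpha>))"
        unfolding pow2_powr by (simp add: powr_diff[symmetric] algebra_simps)
      then show ?thesis by (simp add: field_simps)
    qed
    also have "V/2^q \<le> V * 2 powr (-(real q*\<alpha>))"
    proof -
      have "1/(2::real)^q \<le> 2 powr (-(real q*\<alpha>))"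
      proof -
        have "real q * \<alpha> \<le> real q" using a by (simp add: mult_left_le)
        then show ?thesis unfolding pow2_powr using a by (simp add: powr_minus_divide[symmetric] mult_le_cancel_right1)
      qed
      from mult_left_mono[OF this V] show ?thesis by simp
    qed
    finally show ?thesis unfolding Cv_def by (simp add: algebra_simps)
  qed
  show ?thesis using opb_mono[OF opbK bound] unfolding eq[symmetric] e1_def e2_def .
qed



lemma sum_bound:
  assumes "0 < \<gamma>" "\<gamma> < 2" "0 \<le> K"
  shows "(\<Sum>p<r. 2 * (2^p/2^(r+1))^2 * (K * 2 powr (-(real p * \<gamma>))))
        \<le> K / (2 * (2 powr (2 - \<gamma>) - 1)) * 2 powr (-(real r * \<gamma>))"
proof -
  have g1: "2 powr (2 - \<gamma>) > 1" using assms by simp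
  have e: "2 * (2^p/2^(r+1))^2 * (K * 2 powr (-(real p * \<gamma>))) = (K * 2 powr (-(2*real r + 1))) * 2 powr (real p * (2 - \<gamma>))" for p
  proof -
    have "(2^p/2^(r+1))^2 = (2::real) powr (2*real p - 2*real r - 2)"
      unfolding pow2_powr by (simp add: powr_diff[symmetric] powr_powr[symmetric] power2_eq_square powr_add[symmetric] algebra_simps)
    then have "2 * (2^p/2^(r+1))^2 * 2 powr (-(real p * \<gamma>)) = 2 powr (-(2*real r + 1)) * 2 powr (real p * (2 - \<gamma>))"
      by (simp add: powr_add[symmetric] algebra_simps powr_mult_base)
    then show ?thesis by (simp add: algebra_simps)
  qed
  have Kp: "0 \<le> K * 2 powr (-(2*real r + 1))" using assms by simp
  have "(\<Sum>p<r. 2 * (2^p/2^(r+1))^2 * (K * 2 powr (-(real p * \<gamma>))))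
      = (K * 2 powr (-(2*real r + 1))) * (\<Sum>p<r. 2 powr (real p * (2 - \<gamma>)))"
    unfolding e by (simp add: sum_distrib_left)
  also have "\<dots> \<le> (K * 2 powr (-(2*real r + 1))) * (2 powr (real r * (2 - \<gamma>)) / (2 powr (2 - \<gamma>) - 1))"
    by (rule mult_left_mono[OF geo_sum Kp]) (use assms in simp)
  also have "\<dots> = K / (2 * (2 powr (2 - \<gamma>) - 1)) * 2 powr (-(real r * \<gamma>))"
  proof -
    have "2 powr (-(2*real r + 1)) * 2 powr (real r * (2 - \<gamma>)) = (1/2) * 2 powr (-(real r * \<gamma>))"
    proof -
      have "2 powr (-(2*real r + 1)) * 2 powr (real r * (2 - \<gamma>)) = (2::real) powr (-1 + -(real r * \<gamma>))"
        by (simp add: powr_add[symmetric] algebra_simps)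
      also have "\<dots> = 2 powr (-1) * 2 powr (-(real r*\<gamma>))" by (rule powr_add)
      also have "(2::real) powr (-1) = 1/2" by (simp add: powr_minus)
      finally show ?thesis .
    qed
    then have h: "2 powr (-(2*real r + 1)) * 2 powr (real r * (2 - \<gamma>)) = (1/2) * 2 powr (-(real r * \<gamma>))" .
    define A where "A = (2::real) powr (-(2*real r + 1))"
    define B where "B = (2::real) powr (real r * (2 - \<gamma>))"
    define E where "E = (2::real) powr (-(real r * \<gamma>))"
    define D where "D = (2::real) powr (2 - \<gamma>) - 1"
    have h': "A * B = (1/2) * E" using h unfolding A_def B_def E_def .
    have "K * A * (B / D) = K * (A * B) / D" by simp
    also have "\<dots> = K * ((1/2) * E) / D" by (simp only: h')
    also have "\<dots> = K / (2 * D) * E" by simp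
    finally show ?thesis unfolding A_def B_def E_def D_def .
  qed
  finally show ?thesis .
qed

lemma bilin:
  "matvec n (\<lambda>i j. a1 * A1 i j + a2 * A2 i j) (matvec d (\<lambda>j l. b1 * B1 j l + b2 * B2 j l) w) i
   = a1*b1*matvec n A1 (matvec d B1 w) i + a1*b2*matvec n A1 (matvec d B2 w) i
   + a2*b1*matvec n A2 (matvec d B1 w) i + a2*b2*matvec n A2 (matvec d B2 w) i"
  by (simp add: matvec_def sum_distrib_left sum_distrib_right sum.distrib algebra_simps)

lemma matvec_add_right: "matvec n A (\<lambda>j. x j + y j) i = matvec n A x i + matvec n A y i"
  by (simp add: matvec_def sum.distrib algebra_simps)

lemma opb_apply2:
  assumes "opb m n A K1" "opb n d B K2" "0 \<le> K1"
  shows "vnorm m (matvec n A (matvec d B x)) \<le> K1 * K2 * vnorm d x"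
proof -
  have "vnorm m (matvec n A (matvec d B x)) \<le> K1 * vnorm n (matvec d B x)" using opbD[OF assms(1)] .
  also have "\<dots> \<le> K1 * (K2 * vnorm d x)" using opbD[OF assms(2)] assms(3) by (simp add: mult_left_mono)
  finally show ?thesis by simp
qed

lemma ident0:
  "matvec n A (\<lambda>j. matvec d B w j + e j) i - matvec d (matmul n A B) w i = matvec n A e i"
  by (simp add: matvec_add_right matvec_matmul)

lemma lamform:
  fixes A1 A2 :: "nat \<Rightarrow> nat \<Rightarrow> real"
  shows "(\<lambda>i j. A2 i j - A1 i j) = (\<lambda>i j. 1 * A2 i j + (-1) * A1 i j)"
  "(\<lambda>i j. (A1 i j + A2 i j)/2) = (\<lambda>i j. (1/2) * A1 i j + (1/2) * A2 i j)"
  "(\<lambda>i j. A1 i j + A2 i j) = (\<lambda>i j. 1 * A1 i j + 1 * A2 i j)"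
  by (auto simp: fun_eq_iff)

lemma ident1:
  "matvec n (\<lambda>i j. (A1 i j + A2 i j)/2) (\<lambda>j. matvec d (\<lambda>j l. (B1 j l + B2 j l)/2) w j + e j) i
   - matvec d (\<lambda>i l. (matmul n A1 B1 i l + matmul n A2 B2 i l)/2) w i
   = -(1/4) * matvec n (\<lambda>i j. A2 i j - A1 i j) (matvec d (\<lambda>j l. B2 j l - B1 j l) w) i
     + matvec n (\<lambda>i j. (A1 i j + A2 i j)/2) e i"
proof -
  have h: "matvec d (\<lambda>i l. (M1 i l + M2 i l)/2) w i = (1/2) * matvec d M1 w i + (1/2) * matvec d M2 w i" for M1 M2
    by (simp add: matvec_def sum_distrib_left sum.distrib algebra_simps add_divide_distrib)
  have m: "matvec d (\<lambda>i l. (matmul n A1 B1 i l + matmul n A2 B2 i l)/2) w i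
      = (1/2) * matvec n A1 (matvec d B1 w) i + (1/2) * matvec n A2 (matvec d B2 w) i"
    unfolding h matvec_matmul ..
  show ?thesis
    unfolding matvec_add_right m lamform(1)[of A2 A1] lamform(1)[of B2 B1] lamform(2)[of A1 A2] lamform(2)[of B1 B2] bilin
    by (simp add: algebra_simps)
qed

lemma ident2:
  "matvec n (\<lambda>i j. A2 i j - A1 i j) (\<lambda>j. matvec d (\<lambda>j l. (B1 j l + B2 j l)/2) w j + e j) i
   - matvec d (\<lambda>i l. matmul n A2 B2 i l - matmul n A1 B1 i l) w i
   = -(1/2) * matvec n (\<lambda>i j. A1 i j + A2 i j) (matvec d (\<lambda>j l. B2 j l - B1 j l) w) i
     + matvec n (\<lambda>i j. A2 i j - A1 i j) e i"
proof -
  have m: "matvec d (\<lambda>i l. matmul n A2 B2 i l - matmul n A1 B1 i l) w i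
      = matvec n A2 (matvec d B2 w) i - matvec n A1 (matvec d B1 w) i"
    by (simp add: matvec_sub_left matvec_matmul)
  show ?thesis
    unfolding matvec_add_right m lamform(1)[of A2 A1] lamform(1)[of B2 B1] lamform(2)[of B1 B2] lamform(3)[of A1 A2] bilin
    by (simp add: algebra_simps)
qed

lemma SM_mid:
  assumes "1 \<le> r" "1 \<le> k" "k \<le> 2^r"
  shows "SM r V' (pb r k) = (\<lambda>i j. (V' (real (k-1)/2^r) i j + V' ((real (k-1)+1)/2^r) i j)/2)"
proof -
  obtain q where q: "r = Suc q" using assms(1) by (cases r) auto
  have J: "k - 1 < 2^(q+1)" using assms q by simp
  have e: "int r - 1 = int q" using q by simp
  have pbe: "pb r k = (2*real (k-1) + 1)/2^(q+2)" unfolding pb_def using assms(2) q by (simp add: of_nat_diff)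
  show ?thesis unfolding SM_def e pbe spart_mid[OF J] using q by simp
qed

definition Ce :: "real \<Rightarrow> real \<Rightarrow> real" where "Ce a b = Cv a / (2 * (2 powr (2 - (a + b)) - 1))"

definition C0 :: "real \<Rightarrow> real \<Rightarrow> real" where "C0 a b = Cv a / 2 + Ce a b + (Cv a + 2 * Ce a b) / (2 * (2 powr (2 - (a + b)) - 1))"

context
  fixes n m d :: nat and u v :: "real \<Rightarrow> nat \<Rightarrow> nat \<Rightarrow> real" and w :: "real \<Rightarrow> nat \<Rightarrow> real"
    and \<alpha> \<beta> U V W :: real
  assumes a: "0 < \<alpha>" "\<alpha> < 1" and b: "0 < \<beta>" "\<beta> < 1"
    and U: "0 \<le> U" and Ub: "\<And>t. 0 \<le> t \<Longrightarrow> t \<le> 1 \<Longrightarrow> opb m n (u t) U"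
    and V: "0 \<le> V" and Vb: "\<And>p q. q \<le> 2^p \<Longrightarrow> opb n d (mcoef v p q) (V * 2 powr (-(real p * \<alpha>)))"
    and W: "0 \<le> W" and Wb: "\<And>p q. q \<le> 2^p \<Longrightarrow> vnorm d (vcoef w p q) \<le> W * 2 powr (-(real p * \<beta>))"
begin

lemma Ce_nonneg: "0 \<le> Ce \<alpha> \<beta>"
proof -
  have "2 powr (2 - (\<alpha> + \<beta>)) > 1" using a b by simp
  then show ?thesis unfolding Ce_def using Cv_pos[OF a(2)] by simp
qed

lemma vterm_bound:
  assumes "1 \<le> k" "k \<le> 2^r" "p < r"
  shows "vnorm n (\<lambda>i. -2 * matvec d (\<lambda>i j. SM p v (pb r k) i j - SM p v (pa r k) i j)
                              (\<lambda>j. DV p w (pb r k) j - DV p w (pa r k) j) i)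
     \<le> 2 * (2^p/2^(r+1))^2 * ((Cv \<alpha> * V * W) * 2 powr (-(real p * (\<alpha> + \<beta>))))"
proof (cases "p = 0")
  case True
  have z: "(\<lambda>i j. SM p v (pb r k) i j - SM p v (pa r k) i j) = (\<lambda>i j. 0)" using True by (simp add: SM_0)
  have z2: "matvec d (\<lambda>i j. 0) x = (\<lambda>i. 0)" for x by (simp add: matvec_def)
  have "0 \<le> 2 * (2^p/2^(r+1))^2 * ((Cv \<alpha> * V * W) * 2 powr (-(real p * (\<alpha> + \<beta>))))"
    using Cv_pos[OF a(2)] V W by simp
  then show ?thesis unfolding z z2 by simp
next
  case False
  then have p1: "1 \<le> p" by simp
  define J where "J = jj r k p div 2"
  have J: "J < 2^p" unfolding J_def using JJ_bound[OF assms] .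
  define c1 :: real where "c1 = 2^p/2^(r+1)"
  define c2 :: real where "c2 = (if even (jj r k p) then 1 else -1) * 2^p/2^(r+1)"
  have cc: "\<bar>-2 * c1 * c2\<bar> = 2 * (2^p/2^(r+1))^2" unfolding c1_def c2_def by (simp add: power2_eq_square)
  have eq: "(\<lambda>i. -2 * matvec d (\<lambda>i j. SM p v (pb r k) i j - SM p v (pa r k) i j)
                              (\<lambda>j. DV p w (pb r k) j - DV p w (pa r k) j) i)
     = (\<lambda>i. (-2 * c1 * c2) * matvec d (\<lambda>i j. v ((real J + 1)/2^p) i j - v (real J/2^p) i j) (vcoef w p (J+1)) i)"
    unfolding dSM_form[OF assms p1] dDV_form[OF assms p1] matvec_scale c1_def c2_def J_def by (simp add: algebra_simps)
  have iv: "opb n d (\<lambda>i j. v ((real J + 1)/2^p) i j - v (real J/2^p) i j) (Cv \<alpha> * V * 2 powr (-(real p*\<alpha>)))"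
    by (rule incr_v[OF Vb V a p1 J])
  have wb: "vnorm d (vcoef w p (J+1)) \<le> W * 2 powr (-(real p * \<beta>))" using Wb J by simp
  have "vnorm n (matvec d (\<lambda>i j. v ((real J + 1)/2^p) i j - v (real J/2^p) i j) (vcoef w p (J+1)))
      \<le> (Cv \<alpha> * V * 2 powr (-(real p*\<alpha>))) * (W * 2 powr (-(real p * \<beta>)))"
    using opbD[OF iv] wb Cv_pos[OF a(2)] V by (smt (verit) mult_left_mono mult_nonneg_nonneg powr_ge_zero)
  also have "\<dots> = (Cv \<alpha> * V * W) * 2 powr (-(real p * (\<alpha> + \<beta>)))"
    by (simp add: algebra_simps powr_add[symmetric])
  finally have B: "vnorm n (matvec d (\<lambda>i j. v ((real J + 1)/2^p) i j - v (real J/2^p) i j) (vcoef w p (J+1)))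
      \<le> (Cv \<alpha> * V * W) * 2 powr (-(real p * (\<alpha> + \<beta>)))" .
  show ?thesis unfolding eq vnorm_scale cc using B by (simp add: mult_left_mono)
qed

abbreviation X where "X \<equiv> paraprod d v w"
definition eps where "eps r k = (\<lambda>i. vcoef X r k i - matvec d (SM r v (pb r k)) (vcoef w r k) i)"

lemma eps_bound:
  assumes "1 \<le> k" "k \<le> 2^r"
  shows "vnorm n (eps r k) \<le> Ce \<alpha> \<beta> * V * W * 2 powr (-(real r * (\<alpha> + \<beta>)))"
proof -
  have e: "eps r k = (\<lambda>i. \<Sum>p<r. -2 * matvec d (\<lambda>i j. SM p v (pb r k) i j - SM p v (pa r k) i j)
                              (\<lambda>j. DV p w (pb r k) j - DV p w (pa r k) j) i)"
    unfolding eps_def using gen_coef[OF assms] by simp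
  have "vnorm n (eps r k) \<le> (\<Sum>p<r. vnorm n (\<lambda>i. -2 * matvec d (\<lambda>i j. SM p v (pb r k) i j - SM p v (pa r k) i j)
                              (\<lambda>j. DV p w (pb r k) j - DV p w (pa r k) j) i))"
    unfolding e by (rule vnorm_sum) simp
  also have "\<dots> \<le> (\<Sum>p<r. 2 * (2^p/2^(r+1))^2 * ((Cv \<alpha> * V * W) * 2 powr (-(real p * (\<alpha> + \<beta>)))))"
    by (rule sum_mono) (use vterm_bound[OF assms] in simp)
  also have "\<dots> \<le> (Cv \<alpha> * V * W) / (2 * (2 powr (2 - (\<alpha> + \<beta>)) - 1)) * 2 powr (-(real r * (\<alpha> + \<beta>)))"
    by (rule sum_bound) (use a b Cv_pos[OF a(2)] V W in auto)
  also have "\<dots> = Ce \<alpha> \<beta> * V * W * 2 powr (-(real r * (\<alpha> + \<beta>)))"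
    unfolding Ce_def by simp
  finally show ?thesis .
qed

abbreviation UV where "UV \<equiv> (\<lambda>s. matmul n (u s) (v s))"

lemma X_coef: "vcoef X r k = (\<lambda>j. matvec d (SM r v (pb r k)) (vcoef w r k) j + eps r k j)"
  unfolding eps_def by simp

lemma Dterm_bound:
  assumes "1 \<le> k" "k \<le> 2^r" "p < r"
  shows "vnorm m (\<lambda>i. -2 * matvec n (\<lambda>i j. SM p u (pb r k) i j - SM p u (pa r k) i j)
                              (\<lambda>j. DV p X (pb r k) j - DV p X (pa r k) j) i
                    - -2 * matvec d (\<lambda>i j. SM p UV (pb r k) i j - SM p UV (pa r k) i j)
                              (\<lambda>j. DV p w (pb r k) j - DV p w (pa r k) j) i)
     \<le> 2 * (2^p/2^(r+1))^2 * (((Cv \<alpha> + 2 * Ce \<alpha> \<beta>) * U * V * W) * 2 powr (-(real p * (\<alpha> + \<beta>))))"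
proof (cases "p = 0")
  case True
  have z: "(\<lambda>i j. SM p V' (pb r k) i j - SM p V' (pa r k) i j) = (\<lambda>i j. 0)" for V' using True by (simp add: SM_0)
  have z2: "matvec d' (\<lambda>i j. 0) x = (\<lambda>i. 0)" for x d' by (simp add: matvec_def)
  have "0 \<le> 2 * (2^p/2^(r+1))^2 * (((Cv \<alpha> + 2 * Ce \<alpha> \<beta>) * U * V * W) * 2 powr (-(real p * (\<alpha> + \<beta>))))"
    using Cv_pos[OF a(2)] Ce_nonneg U V W by simp
  then show ?thesis unfolding z z2 by simp
next
  case False
  then have p1: "1 \<le> p" by simp
  define J where "J = jj r k p div 2"
  have J: "J < 2^p" unfolding J_def using JJ_bound[OF assms] .
  define eL where "eL = real J/2^p"
  define eR where "eR = (real J + 1)/2^p"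
  have eLR: "0 \<le> eL" "eL \<le> 1" "0 \<le> eR" "eR \<le> 1" using J unfolding eL_def eR_def
    by (auto simp: field_simps) (metis Suc_le_eq of_nat_Suc of_nat_le_iff of_nat_numeral of_nat_power add.commute)
  define c1 :: real where "c1 = 2^p/2^(r+1)"
  define c2 :: real where "c2 = (if even (jj r k p) then 1 else -1) * 2^p/2^(r+1)"
  have cc: "\<bar>-2 * c1 * c2\<bar> = 2 * (2^p/2^(r+1))^2" unfolding c1_def c2_def by (simp add: power2_eq_square)
  define wM where "wM = vcoef w p (J+1)"
  define A1 where "A1 = u eL"
  define A2 where "A2 = u eR"
  define B1 where "B1 = v eL"
  define B2 where "B2 = v eR"
  have eq: "(\<lambda>i. -2 * matvec n (\<lambda>i j. SM p u (pb r k) i j - SM p u (pa r k) i j)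
                              (\<lambda>j. DV p X (pb r k) j - DV p X (pa r k) j) i
                    - -2 * matvec d (\<lambda>i j. SM p UV (pb r k) i j - SM p UV (pa r k) i j)
                              (\<lambda>j. DV p w (pb r k) j - DV p w (pa r k) j) i)
     = (\<lambda>i. (-2 * c1 * c2) * (matvec n (\<lambda>i j. A2 i j - A1 i j) (vcoef X p (J+1)) i
            - matvec d (\<lambda>i l. matmul n A2 B2 i l - matmul n A1 B1 i l) wM i))"
    unfolding dSM_form[OF assms p1] dDV_form[OF assms p1] matvec_scale
    unfolding c1_def c2_def J_def[symmetric] eL_def[symmetric] eR_def[symmetric] wM_def A1_def A2_def B1_def B2_def
    by (simp add: algebra_simps)
  have mid: "SM p v (pb p (J+1)) = (\<lambda>j l. (B1 j l + B2 j l)/2)"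
    using SM_mid[OF p1, of "J+1" v] J unfolding B1_def B2_def eL_def eR_def by simp
  have br: "matvec n (\<lambda>i j. A2 i j - A1 i j) (vcoef X p (J+1)) i
            - matvec d (\<lambda>i l. matmul n A2 B2 i l - matmul n A1 B1 i l) wM i
     = -(1/2) * matvec n (\<lambda>i j. A1 i j + A2 i j) (matvec d (\<lambda>j l. B2 j l - B1 j l) wM) i
       + matvec n (\<lambda>i j. A2 i j - A1 i j) (eps p (J+1)) i" for i
    unfolding X_coef mid wM_def[symmetric] by (rule ident2)
  have oA1: "opb m n A1 U" "opb m n A2 U" unfolding A1_def A2_def using Ub eLR by auto
  have oAp: "opb m n (\<lambda>i j. A1 i j + A2 i j) (U + U)" by (rule opb_add[OF oA1])
  have oAm: "opb m n (\<lambda>i j. A2 i j - A1 i j) (U + U)" by (rule opb_sub[OF oA1(2) oA1(1)])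
  have oB: "opb n d (\<lambda>j l. B2 j l - B1 j l) (Cv \<alpha> * V * 2 powr (-(real p*\<alpha>)))"
    unfolding B1_def B2_def eL_def eR_def by (rule incr_v[OF Vb V a p1 J])
  have wb: "vnorm d wM \<le> W * 2 powr (-(real p * \<beta>))" unfolding wM_def using Wb J by simp
  have eb: "vnorm n (eps p (J+1)) \<le> Ce \<alpha> \<beta> * V * W * 2 powr (-(real p * (\<alpha> + \<beta>)))"
    using eps_bound[of "J+1" p] J by simp
  have t1: "vnorm m (matvec n (\<lambda>i j. A1 i j + A2 i j) (matvec d (\<lambda>j l. B2 j l - B1 j l) wM))
     \<le> (U + U) * (Cv \<alpha> * V * 2 powr (-(real p*\<alpha>))) * (W * 2 powr (-(real p * \<beta>)))"
  proof -
    have "vnorm m (matvec n (\<lambda>i j. A1 i j + A2 i j) (matvec d (\<lambda>j l. B2 j l - B1 j l) wM))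
       \<le> (U + U) * (Cv \<alpha> * V * 2 powr (-(real p*\<alpha>))) * vnorm d wM"
      by (rule opb_apply2[OF oAp oB]) (use U in simp)
    also have "\<dots> \<le> (U + U) * (Cv \<alpha> * V * 2 powr (-(real p*\<alpha>))) * (W * 2 powr (-(real p * \<beta>)))"
      by (rule mult_left_mono[OF wb]) (use U V Cv_pos[OF a(2)] in simp)
    finally show ?thesis .
  qed
  have t2: "vnorm m (matvec n (\<lambda>i j. A2 i j - A1 i j) (eps p (J+1)))
     \<le> (U + U) * (Ce \<alpha> \<beta> * V * W * 2 powr (-(real p * (\<alpha> + \<beta>))))"
    using opbD[OF oAm, of "eps p (J+1)"] eb mult_left_mono[OF eb, of "U+U"] U by linarith
  have pw: "2 powr (-(real p*\<alpha>)) * 2 powr (-(real p * \<beta>)) = (2::real) powr (-(real p * (\<alpha> + \<beta>)))"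
    by (simp add: powr_add[symmetric] algebra_simps)
  have "vnorm m (\<lambda>i. -(1/2) * matvec n (\<lambda>i j. A1 i j + A2 i j) (matvec d (\<lambda>j l. B2 j l - B1 j l) wM) i
       + matvec n (\<lambda>i j. A2 i j - A1 i j) (eps p (J+1)) i)
     \<le> \<bar>-(1/2)\<bar> * vnorm m (matvec n (\<lambda>i j. A1 i j + A2 i j) (matvec d (\<lambda>j l. B2 j l - B1 j l) wM))
        + vnorm m (matvec n (\<lambda>i j. A2 i j - A1 i j) (eps p (J+1)))"
    using vnorm_add[of m "\<lambda>i. -(1/2) * matvec n (\<lambda>i j. A1 i j + A2 i j) (matvec d (\<lambda>j l. B2 j l - B1 j l) wM) i"
        "matvec n (\<lambda>i j. A2 i j - A1 i j) (eps p (J+1))"] unfolding vnorm_scale by simp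
  also have "\<dots> \<le> (1/2) * ((U + U) * (Cv \<alpha> * V * 2 powr (-(real p*\<alpha>))) * (W * 2 powr (-(real p * \<beta>))))
        + (U + U) * (Ce \<alpha> \<beta> * V * W * 2 powr (-(real p * (\<alpha> + \<beta>))))"
    using t1 t2 by simp
  also have "\<dots> = ((Cv \<alpha> + 2 * Ce \<alpha> \<beta>) * U * V * W) * 2 powr (-(real p * (\<alpha> + \<beta>)))"
    using pw by (simp add: algebra_simps)
  finally have B: "vnorm m (\<lambda>i. -(1/2) * matvec n (\<lambda>i j. A1 i j + A2 i j) (matvec d (\<lambda>j l. B2 j l - B1 j l) wM) i
       + matvec n (\<lambda>i j. A2 i j - A1 i j) (eps p (J+1)) i)
     \<le> ((Cv \<alpha> + 2 * Ce \<alpha> \<beta>) * U * V * W) * 2 powr (-(real p * (\<alpha> + \<beta>)))" .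
  show ?thesis unfolding eq br vnorm_scale cc using B by (simp add: mult_left_mono)
qed

lemma top_bound:
  assumes "1 \<le> k" "k \<le> 2^r"
  shows "vnorm m (\<lambda>i. matvec n (SM r u (pb r k)) (vcoef X r k) i - matvec d (SM r UV (pb r k)) (vcoef w r k) i)
     \<le> (Cv \<alpha> / 2 + Ce \<alpha> \<beta>) * U * V * W * 2 powr (-(real r * (\<alpha> + \<beta>)))"
proof (cases "r = 0")
  case True
  have eq: "(\<lambda>i. matvec n (SM r u (pb r k)) (vcoef X r k) i - matvec d (SM r UV (pb r k)) (vcoef w r k) i)
     = matvec n (u 0) (eps r k)"
    unfolding X_coef using True by (simp add: SM_0 ident0)
  have "vnorm m (matvec n (u 0) (eps r k)) \<le> U * vnorm n (eps r k)" using opbD[OF Ub[of 0]] by simp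
  also have "\<dots> \<le> U * (Ce \<alpha> \<beta> * V * W * 2 powr (-(real r * (\<alpha> + \<beta>))))"
    by (rule mult_left_mono[OF eps_bound[OF assms] U])
  also have "\<dots> \<le> (Cv \<alpha> / 2 + Ce \<alpha> \<beta>) * U * V * W * 2 powr (-(real r * (\<alpha> + \<beta>)))"
  proof -
    have "0 \<le> Cv \<alpha> / 2 * U * V * W" using Cv_pos[OF a(2)] U V W by simp
    then show ?thesis using True by (simp add: algebra_simps)
  qed
  finally show ?thesis unfolding eq .
next
  case False
  then have r1: "1 \<le> r" by simp
  define J where "J = k - 1"
  have J: "J < 2^r" using assms unfolding J_def by simp
  define eL where "eL = real J/2^r"
  define eR where "eR = (real J + 1)/2^r"
  have eLR: "0 \<le> eL" "eL \<le> 1" "0 \<le> eR" "eR \<le> 1" using J unfolding eL_def eR_def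
    by (auto simp: field_simps) (metis Suc_le_eq of_nat_Suc of_nat_le_iff of_nat_numeral of_nat_power add.commute)
  define A1 where "A1 = u eL"
  define A2 where "A2 = u eR"
  define B1 where "B1 = v eL"
  define B2 where "B2 = v eR"
  define wr where "wr = vcoef w r k"
  have mu: "SM r u (pb r k) = (\<lambda>i j. (A1 i j + A2 i j)/2)"
    using SM_mid[OF r1 assms, of u] unfolding A1_def A2_def eL_def eR_def J_def by simp
  have mv: "SM r v (pb r k) = (\<lambda>i j. (B1 i j + B2 i j)/2)"
    using SM_mid[OF r1 assms, of v] unfolding B1_def B2_def eL_def eR_def J_def by simp
  have muv: "SM r UV (pb r k) = (\<lambda>i j. (matmul n A1 B1 i j + matmul n A2 B2 i j)/2)"
    using SM_mid[OF r1 assms, of UV] unfolding A1_def A2_def B1_def B2_def eL_def eR_def J_def by simp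
  have eq: "(\<lambda>i. matvec n (SM r u (pb r k)) (vcoef X r k) i - matvec d (SM r UV (pb r k)) (vcoef w r k) i)
     = (\<lambda>i. -(1/4) * matvec n (\<lambda>i j. A2 i j - A1 i j) (matvec d (\<lambda>j l. B2 j l - B1 j l) wr) i
     + matvec n (\<lambda>i j. (A1 i j + A2 i j)/2) (eps r k) i)"
    unfolding X_coef mu mv muv wr_def[symmetric] ident1 ..
  have oA1: "opb m n A1 U" "opb m n A2 U" unfolding A1_def A2_def using Ub eLR by auto
  have oAm: "opb m n (\<lambda>i j. A2 i j - A1 i j) (U + U)" by (rule opb_sub[OF oA1(2) oA1(1)])
  have oAh: "opb m n (\<lambda>i j. (A1 i j + A2 i j)/2) (\<bar>1/2\<bar> * U + \<bar>1/2\<bar> * U)"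
    unfolding lamform(2) by (rule opb_add[OF opb_scale[OF oA1(1)] opb_scale[OF oA1(2)]])
  have oB: "opb n d (\<lambda>j l. B2 j l - B1 j l) (Cv \<alpha> * V * 2 powr (-(real r*\<alpha>)))"
    unfolding B1_def B2_def eL_def eR_def by (rule incr_v[OF Vb V a r1 J])
  have wb: "vnorm d wr \<le> W * 2 powr (-(real r * \<beta>))" unfolding wr_def using Wb assms by simp
  have eb: "vnorm n (eps r k) \<le> Ce \<alpha> \<beta> * V * W * 2 powr (-(real r * (\<alpha> + \<beta>)))"
    using eps_bound[OF assms] .
  have t1: "vnorm m (matvec n (\<lambda>i j. A2 i j - A1 i j) (matvec d (\<lambda>j l. B2 j l - B1 j l) wr))
     \<le> (U + U) * (Cv \<alpha> * V * 2 powr (-(real r*\<alpha>))) * (W * 2 powr (-(real r * \<beta>)))"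
  proof -
    have "vnorm m (matvec n (\<lambda>i j. A2 i j - A1 i j) (matvec d (\<lambda>j l. B2 j l - B1 j l) wr))
       \<le> (U + U) * (Cv \<alpha> * V * 2 powr (-(real r*\<alpha>))) * vnorm d wr"
      by (rule opb_apply2[OF oAm oB]) (use U in simp)
    also have "\<dots> \<le> (U + U) * (Cv \<alpha> * V * 2 powr (-(real r*\<alpha>))) * (W * 2 powr (-(real r * \<beta>)))"
      by (rule mult_left_mono[OF wb]) (use U V Cv_pos[OF a(2)] in simp)
    finally show ?thesis .
  qed
  have t2: "vnorm m (matvec n (\<lambda>i j. (A1 i j + A2 i j)/2) (eps r k))
     \<le> U * (Ce \<alpha> \<beta> * V * W * 2 powr (-(real r * (\<alpha> + \<beta>))))"
    using opbD[OF oAh, of "eps r k"] mult_left_mono[OF eb U] by simp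
  have pw: "2 powr (-(real r*\<alpha>)) * 2 powr (-(real r * \<beta>)) = (2::real) powr (-(real r * (\<alpha> + \<beta>)))"
    by (simp add: powr_add[symmetric] algebra_simps)
  have "vnorm m (\<lambda>i. -(1/4) * matvec n (\<lambda>i j. A2 i j - A1 i j) (matvec d (\<lambda>j l. B2 j l - B1 j l) wr) i
     + matvec n (\<lambda>i j. (A1 i j + A2 i j)/2) (eps r k) i)
     \<le> (1/4) * vnorm m (matvec n (\<lambda>i j. A2 i j - A1 i j) (matvec d (\<lambda>j l. B2 j l - B1 j l) wr))
        + vnorm m (matvec n (\<lambda>i j. (A1 i j + A2 i j)/2) (eps r k))"
    using vnorm_add[of m "\<lambda>i. -(1/4) * matvec n (\<lambda>i j. A2 i j - A1 i j) (matvec d (\<lambda>j l. B2 j l - B1 j l) wr) i"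
        "matvec n (\<lambda>i j. (A1 i j + A2 i j)/2) (eps r k)"] unfolding vnorm_scale by simp
  also have "\<dots> \<le> (1/4) * ((U + U) * (Cv \<alpha> * V * 2 powr (-(real r*\<alpha>))) * (W * 2 powr (-(real r * \<beta>))))
        + U * (Ce \<alpha> \<beta> * V * W * 2 powr (-(real r * (\<alpha> + \<beta>))))"
    using t1 t2 by linarith
  also have "\<dots> = (Cv \<alpha> / 2 + Ce \<alpha> \<beta>) * U * V * W * 2 powr (-(real r * (\<alpha> + \<beta>)))"
    using pw by (simp add: algebra_simps)
  finally show ?thesis unfolding eq .
qed


lemma Dcoef_bound:
  assumes "1 \<le> k" "k \<le> 2^r"
  shows "vnorm m (vcoef (\<lambda>t i. paraprod n u X t i - paraprod d UV w t i) r k)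
     \<le> C0 \<alpha> \<beta> * U * V * W * 2 powr (-(real r * (\<alpha> + \<beta>)))"
proof -
  define TP where "TP p = (\<lambda>i. -2 * matvec n (\<lambda>i j. SM p u (pb r k) i j - SM p u (pa r k) i j)
                              (\<lambda>j. DV p X (pb r k) j - DV p X (pa r k) j) i
                    - -2 * matvec d (\<lambda>i j. SM p UV (pb r k) i j - SM p UV (pa r k) i j)
                              (\<lambda>j. DV p w (pb r k) j - DV p w (pa r k) j) i)" for p
  define top where "top = (\<lambda>i. matvec n (SM r u (pb r k)) (vcoef X r k) i - matvec d (SM r UV (pb r k)) (vcoef w r k) i)"
  have eq: "vcoef (\<lambda>t i. paraprod n u X t i - paraprod d UV w t i) r k = (\<lambda>i. top i + (\<Sum>p<r. TP p i))"
  proof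
    fix i
    have "vcoef (\<lambda>t i. paraprod n u X t i - paraprod d UV w t i) r k i
        = vcoef (paraprod n u X) r k i - vcoef (paraprod d UV w) r k i"
      unfolding vcoef_pos[OF assms(1)] by simp
    also have "\<dots> = top i + (\<Sum>p<r. TP p i)"
      unfolding gen_coef[OF assms] top_def TP_def sum_subtractf by linarith
    finally show "vcoef (\<lambda>t i. paraprod n u X t i - paraprod d UV w t i) r k i = top i + (\<Sum>p<r. TP p i)" .
  qed
  have K: "0 \<le> (Cv \<alpha> + 2 * Ce \<alpha> \<beta>) * U * V * W" using Cv_pos[OF a(2)] Ce_nonneg U V W by simp
  have "vnorm m (\<lambda>i. top i + (\<Sum>p<r. TP p i)) \<le> vnorm m top + vnorm m (\<lambda>i. \<Sum>p<r. TP p i)"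
    by (rule vnorm_add)
  also have "\<dots> \<le> vnorm m top + (\<Sum>p<r. vnorm m (TP p))"
    using vnorm_sum[of "{..<r}" m TP] by simp
  also have "\<dots> \<le> (Cv \<alpha> / 2 + Ce \<alpha> \<beta>) * U * V * W * 2 powr (-(real r * (\<alpha> + \<beta>)))
     + (\<Sum>p<r. 2 * (2^p/2^(r+1))^2 * (((Cv \<alpha> + 2 * Ce \<alpha> \<beta>) * U * V * W) * 2 powr (-(real p * (\<alpha> + \<beta>)))))"
    using top_bound[OF assms] Dterm_bound[OF assms] unfolding top_def TP_def
    by (intro add_mono sum_mono) auto
  also have "\<dots> \<le> (Cv \<alpha> / 2 + Ce \<alpha> \<beta>) * U * V * W * 2 powr (-(real r * (\<alpha> + \<beta>)))
     + (Cv \<alpha> + 2 * Ce \<alpha> \<beta>) * U * V * W / (2 * (2 powr (2 - (\<alpha> + \<beta>)) - 1)) * 2 powr (-(real r * (\<alpha> + \<beta>)))"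
    by (rule add_left_mono, rule sum_bound) (use a b K in auto)
  also have "\<dots> = C0 \<alpha> \<beta> * U * V * W * 2 powr (-(real r * (\<alpha> + \<beta>)))"
    unfolding C0_def by (simp add: algebra_simps add_divide_distrib)
  finally show ?thesis unfolding eq .
qed

end



lemma paraprod_at0: "paraprod k V W 0 i = 0"
proof -
  have "paraprod k V W (real 0/2^1) i = (\<Sum>p<1. matvec k (SM p V (real 0/2^1)) (DV p W (real 0/2^1)) i)"
    by (rule paraprod_fin) auto
  moreover have "DV 0 W 0 = (\<lambda>j. 0)" unfolding DV_def using sdelta_0_val[of 0] by simp
  ultimately show ?thesis by (simp add: matvec_def)
qed

lemma paraprod_at1: "paraprod k V W 1 i = matvec k (V 0) (\<lambda>j. W 1 j - W 0 j) i"
proof -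
  have "paraprod k V W (real 2/2^1) i = (\<Sum>p<1. matvec k (SM p V (real 2/2^1)) (DV p W (real 2/2^1)) i)"
    by (rule paraprod_fin) auto
  moreover have "DV 0 W 1 = (\<lambda>j. W 1 j - W 0 j)" unfolding DV_def using sdelta_0_val[of 1]
    by (simp add: scoef_def)
  ultimately show ?thesis by (simp add: SM_0)
qed

lemma C0_nonneg: "0 < a \<Longrightarrow> a < 1 \<Longrightarrow> 0 < b \<Longrightarrow> b < 1 \<Longrightarrow> 0 \<le> C0 a b"
proof -
  assume h: "0 < a" "a < 1" "0 < b" "b < 1"
  have g: "2 powr (2 - (a + b)) > 1" using h by simp
  have ce: "0 \<le> Ce a b" unfolding Ce_def using Cv_pos[OF h(2)] g by simp
  show ?thesis unfolding C0_def using Cv_pos[OF h(2)] ce g by (simp add: add_nonneg_nonneg)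
qed

theorem mainTheorem10:
  fixes \<alpha> \<beta> :: real
  assumes "0 < \<alpha>" "\<alpha> < 1" "0 < \<beta>" "\<beta> < 1"
  shows "\<exists>C>0. \<forall>(n::nat) (m::nat) (d::nat)
            (u :: real \<Rightarrow> nat \<Rightarrow> nat \<Rightarrow> real)
            (v :: real \<Rightarrow> nat \<Rightarrow> nat \<Rightarrow> real)
            (w :: real \<Rightarrow> nat \<Rightarrow> real).
           cont_mat m n u \<and> Hoelder_mat \<alpha> n d v \<and> Hoelder_vec \<beta> d w \<longrightarrow>
           (let D = (\<lambda>t i. paraprod n u (paraprod d v w) t i
                           - paraprod d (\<lambda>s. matmul n (u s) (v s)) w t i)
            in bdd_above (hset_vec (\<alpha> + \<beta>) m D) \<and>
               hnorm_vec (\<alpha> + \<beta>) m D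
                 \<le> C * supnorm_mat m n u * hnorm_mat \<alpha> n d v * hnorm_vec \<beta> d w)"
proof (intro exI[of _ "C0 \<alpha> \<beta> + 1"] conjI allI impI)
  have C0: "0 \<le> C0 \<alpha> \<beta>" using C0_nonneg assms by blast
  show "0 < C0 \<alpha> \<beta> + 1" using C0 by simp
  fix n m d :: nat and u v :: "real \<Rightarrow> nat \<Rightarrow> nat \<Rightarrow> real" and w :: "real \<Rightarrow> nat \<Rightarrow> real"
  assume H: "cont_mat m n u \<and> Hoelder_mat \<alpha> n d v \<and> Hoelder_vec \<beta> d w"
  define U where "U = supnorm_mat m n u"
  define V where "V = hnorm_mat \<alpha> n d v"
  define W where "W = hnorm_vec \<beta> d w"
  have cu: "continuous_on {0..1} (\<lambda>t. frob m n (u t))"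
    using H unfolding cont_mat_def frob_def by (auto intro!: continuous_intros)
  obtain B where B: "\<And>t. t \<in> {0..1} \<Longrightarrow> norm (frob m n (u t)) \<le> B"
    using continuous_on_compact_bound[OF compact_Icc cu] by blast
  have bddU: "bdd_above ((\<lambda>t. opnorm m n (u t)) ` {0..1})"
  proof (rule bdd_aboveI)
    fix y assume "y \<in> (\<lambda>t. opnorm m n (u t)) ` {0..1}"
    then obtain t where t: "t \<in> {0..1}" "y = opnorm m n (u t)" by auto
    show "y \<le> B" using opnorm_le_frob[of m n "u t"] B[OF t(1)] t(2) by auto
  qed
  have Uge: "opnorm m n (u t) \<le> U" if "0 \<le> t" "t \<le> 1" for t
    unfolding U_def supnorm_mat_def by (rule cSup_upper) (use that bddU in auto)
  have U: "0 \<le> U" using Uge[of 0] opnorm_nonneg[of m n "u 0"] by simp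
  have Ub: "opb m n (u t) U" if "0 \<le> t" "t \<le> 1" for t
    using opb_mono[OF opb_opnorm Uge[OF that]] .
  have bddV: "bdd_above (hset_mat \<alpha> n d v)" using H unfolding Hoelder_mat_def by simp
  have Vin: "2 powr (real p * \<alpha>) * opnorm n d (mcoef v p q) \<le> V" if "q \<le> 2^p" for p q
    unfolding V_def hnorm_mat_def by (rule cSup_upper) (use that bddV in \<open>auto simp: hset_mat_def\<close>)
  have V: "0 \<le> V"
  proof -
    have "0 \<le> 2 powr (real 0 * \<alpha>) * opnorm n d (mcoef v 0 0)" by (simp add: opnorm_nonneg)
    then show ?thesis using Vin[of 0 0] by linarith
  qed
  have Vb: "opb n d (mcoef v p q) (V * 2 powr (-(real p * \<alpha>)))" if "q \<le> 2^p" for p q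
  proof -
    have "opnorm n d (mcoef v p q) \<le> V * 2 powr (-(real p * \<alpha>))"
      using Vin[OF that] by (simp add: powr_minus field_simps)
    then show ?thesis using opb_mono[OF opb_opnorm] by blast
  qed
  have bddW: "bdd_above (hset_vec \<beta> d w)" using H unfolding Hoelder_vec_def by simp
  have Win: "2 powr (real p * \<beta>) * vnorm d (vcoef w p q) \<le> W" if "q \<le> 2^p" for p q
    unfolding W_def hnorm_vec_def by (rule cSup_upper) (use that bddW in \<open>auto simp: hset_vec_def\<close>)
  have W: "0 \<le> W"
  proof -
    have "0 \<le> 2 powr (real 0 * \<beta>) * vnorm d (vcoef w 0 0)" by simp
    then show ?thesis using Win[of 0 0] by linarith
  qed
  have Wb: "vnorm d (vcoef w p q) \<le> W * 2 powr (-(real p * \<beta>))" if "q \<le> 2^p" for p q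
    using Win[OF that] by (simp add: powr_minus field_simps)
  define D where "D = (\<lambda>t i. paraprod n u (paraprod d v w) t i - paraprod d (\<lambda>s. matmul n (u s) (v s)) w t i)"
  have UVW: "0 \<le> U * V * W" using U V W by simp
  define K where "K = C0 \<alpha> \<beta> * U * V * W"
  have K: "0 \<le> K" unfolding K_def using mult_nonneg_nonneg[OF C0 UVW] by (simp add: mult.assoc)
  have D0: "vnorm m (D 0) = 0" unfolding D_def by (simp add: paraprod_at0)
  have D1: "D 1 = (\<lambda>i. 0)"
    unfolding D_def by (simp add: paraprod_at1 paraprod_at0 matvec_matmul)
  have elems: "x \<le> K" if "x \<in> hset_vec (\<alpha> + \<beta>) m D" for x
  proof -
    from that consider "x = 2 powr (-(\<alpha> + \<beta>)) * vnorm m (D 0)"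
      | p q where "x = 2 powr (real p * (\<alpha> + \<beta>)) * vnorm m (vcoef D p q)" "q \<le> 2^p"
      unfolding hset_vec_def by blast
    then show ?thesis
    proof cases
      case 1 then show ?thesis using D0 K by simp
    next
      case (2 p q)
      show ?thesis
      proof (cases "q = 0")
        case True
        have "vcoef D p q = (\<lambda>i. 0)" using True D1 unfolding vcoef_def scoef_def
          by (auto simp: D_def paraprod_at0 fun_eq_iff)
        then show ?thesis using 2 K by simp
      next
        case False
        then have q1: "1 \<le> q" by simp
        have "vnorm m (vcoef D p q) \<le> C0 \<alpha> \<beta> * U * V * W * 2 powr (-(real p * (\<alpha> + \<beta>)))"
          using Dcoef_bound[where u=u and v=v and w=w and U=U and V=V and W=W and n=n and m=m and d=d, OF assms U Ub V Vb W Wb q1 2(2)] unfolding D_def by simp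
        then have "2 powr (real p * (\<alpha> + \<beta>)) * vnorm m (vcoef D p q)
            \<le> 2 powr (real p * (\<alpha> + \<beta>)) * (K * 2 powr (-(real p * (\<alpha> + \<beta>))))"
          unfolding K_def by (simp add: mult_left_mono)
        also have "\<dots> = K" by (simp add: powr_minus)
        finally show ?thesis using 2 by simp
      qed
    qed
  qed
  have bdd: "bdd_above (hset_vec (\<alpha> + \<beta>) m D)" using elems by (rule bdd_aboveI)
  have hn: "hnorm_vec (\<alpha> + \<beta>) m D \<le> K"
    unfolding hnorm_vec_def by (rule cSup_least) (use elems in \<open>auto simp: hset_vec_def\<close>)
  also have "K \<le> (C0 \<alpha> \<beta> + 1) * U * V * W" unfolding K_def using UVW by (simp add: algebra_simps)
  finally show "let D = (\<lambda>t i. paraprod n u (paraprod d v w) t i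
                           - paraprod d (\<lambda>s. matmul n (u s) (v s)) w t i)
            in bdd_above (hset_vec (\<alpha> + \<beta>) m D) \<and>
               hnorm_vec (\<alpha> + \<beta>) m D
                 \<le> (C0 \<alpha> \<beta> + 1) * supnorm_mat m n u * hnorm_mat \<alpha> n d v * hnorm_vec \<beta> d w"
    using bdd unfolding D_def[symmetric] U_def V_def W_def Let_def by simp
qed



end
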